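(* Fix $\nu>2$, and let $m=m(n)$ be even with $m=o(\log n)$. There exist absolute constants $c,\sigma_0>0$ and $N\in\mathbb N$ such that, for all $n\ge N$ (with $\sigma_n:=\min\{\sigma_0n^{-\frac{\nu-2}{2\nu}},1\}$, $N$ being large enough that $3\sigma_n^{2\nu/(\nu-2)}\le1$), $$\mathbb P\big(p_m^*(Z)<-2\sigma_n\big)-\mathbb P\big(p_m^*(X)<-2\sigma_n\big)\ge c\,n^{-\frac{\nu-2}{2\nu m}}.$$
   Context: Heavy-tailed law $\tilde\mu_{\nu,\sigma}$: set $p:=\sigma^{2\nu/(\nu-2)}$ and $x_0:=\sigma/\sqrt{6p}$. Let $U$ be a random variable with $\mathbb P(U=-x_0)=2p$, $\mathbb P(U=0)=1-3p$, $\mathbb P(U=2x_0)=p$, and let $Z\sim\mathcal N(0,\sigma^2)$ be independent of $U$. $\tilde\mu_{\nu,\sigma}$ is the law of $V:=2^{-1/2}U+2^{-1/2}Z$. Construction: $V_1,\dots,V_n$ i.i.d. $\tilde\mu_{\nu,\sigma_n}$, $Y_1,\dots,Y_n$ i.i.d. $\mathcal N(0,1)$ independent of the $V_i$; $X_i:=(V_i,Y_i)\in\mathbb{R}^2$, $X=(X_1,\dots,X_n)$. For $x_i=(x_{i1},x_{i2})\in\mathbb{R}^2$, $p_m^*(x_1,\dots,x_n):=\frac{1}{\sqrt n}\sum_{i=1}^nx_{i1}+\big(\frac{1}{\sqrt n}\sum_{i=1}^nx_{i2}\big)^m$. $Z=(Z_1,\dots,Z_n)$ are independent Gaussian vectors,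 independent of $X$, with $Z_i\sim\mathcal N(\mathbb E[X_i],\mathrm{Var}[X_i])=\mathcal N(0,\mathrm{diag}(\sigma_n^2,1))$. *)

theory Defs
  imports "HOL-Probability.Probability" "HOL-Library.Landau_Symbols"
begin

text \<open>Gaussian law N(mu, s^2) on the reals (s is the standard deviation).\<close>
definition gauss :: "real \<Rightarrow> real \<Rightarrow> real measure" where
  "gauss mu s = density lborel (normal_density mu s)"

definition U_pmf :: "real \<Rightarrow> real \<Rightarrow> real pmf" where
  "U_pmf nu sg =
     (let p = sg powr (2 * nu / (nu - 2)); x0 = sg / sqrt (6 * p)
      in pmf_of_list [(- x0, 2 * p), (0, 1 - 3 * p), (2 * x0, p)])"

definition mu_tilde :: "real \<Rightarrow> real \<Rightarrow> real measure" where
  "mu_tilde nu sg =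
     distr (measure_pmf (U_pmf nu sg) \<Otimes>\<^sub>M gauss 0 sg) borel
       (\<lambda>(u, z). u / sqrt 2 + z / sqrt 2)"

definition pstar :: "nat \<Rightarrow> nat \<Rightarrow> (nat \<Rightarrow> real \<times> real) \<Rightarrow> real" where
  "pstar n m x = (\<Sum>i<n. fst (x i)) / sqrt (real n) + ((\<Sum>i<n. snd (x i)) / sqrt (real n)) ^ m"

definition law_X :: "real \<Rightarrow> real \<Rightarrow> nat \<Rightarrow> (nat \<Rightarrow> real \<times> real) measure" where
  "law_X nu sg n = (\<Pi>\<^sub>M i\<in>{..<n}. mu_tilde nu sg \<Otimes>\<^sub>M gauss 0 1)"

definition law_Z :: "real \<Rightarrow> nat \<Rightarrow> (nat \<Rightarrow> real \<times> real) measure" where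
  "law_Z sg n = (\<Pi>\<^sub>M i\<in>{..<n}. gauss 0 sg \<Otimes>\<^sub>M gauss 0 1)"

definition prob_below :: "(nat \<Rightarrow> real \<times> real) measure \<Rightarrow> nat \<Rightarrow> nat \<Rightarrow> real \<Rightarrow> real" where
  "prob_below M n m t = measure M {x \<in> space M. pstar n m x < t}"

end

theory Submission
  imports Defs
begin


lemma prob_space_gauss[simp]: "s > 0 \<Longrightarrow> prob_space (gauss mu s)"
  unfolding gauss_def by (rule prob_space_normal_density)

lemma sets_gauss[simp, measurable_cong]: "sets (gauss mu s) = sets borel"
  unfolding gauss_def by simp

lemma space_gauss[simp]: "space (gauss mu s) = UNIV"
  unfolding gauss_def by simp

lemma gauss_scale:
  assumes s: "s > 0" and A: "A \<in> sets borel"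
  shows "emeasure (gauss 0 s) A = emeasure (gauss 0 1) {x. s * x \<in> A}"
proof -
  interpret G: prob_space "gauss 0 1" by simp
  have D: "distributed (gauss 0 1) lborel (\<lambda>x. x) (normal_density 0 1)"
  proof -
    have "distr (gauss 0 1) lborel (\<lambda>x. x) = distr (gauss 0 1) (gauss 0 1) (\<lambda>x. x)"
      by (intro distr_cong) auto
    also have "\<dots> = gauss 0 1" by (rule distr_id)
    finally show ?thesis unfolding distributed_def gauss_def by simp
  qed
  have "distributed (gauss 0 1) lborel (\<lambda>x. 0 + s * x) (normal_density (0 + s * 0) (\<bar>s\<bar> * 1))"
    using s by (intro G.normal_density_affine[OF D]) auto
  then have "distr (gauss 0 1) lborel (\<lambda>x. s * x) = gauss 0 s"
    using s by (simp add: distributed_def gauss_def)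
  then have "emeasure (gauss 0 s) A = emeasure (distr (gauss 0 1) lborel (\<lambda>x. s * x)) A" by simp
  also have "\<dots> = emeasure (gauss 0 1) ((\<lambda>x. s * x) -` A \<inter> space (gauss 0 1))"
    using A by (intro emeasure_distr) auto
  finally show ?thesis by (simp add: vimage_def)
qed

lemma emeasure_gauss1: "A \<in> sets borel \<Longrightarrow> emeasure (gauss 0 1) A = (\<integral>\<^sup>+x. ennreal (normal_density 0 1 x) * indicator A x \<partial>lborel)"
  unfolding gauss_def by (simp add: emeasure_density)

lemma gauss1_lower:
  assumes ab: "a \<le> b" and K: "\<And>x. x \<in> {a..<b} \<Longrightarrow> x\<^sup>2 \<le> 2 * K"
  shows "ennreal ((b - a) * exp (-K) / sqrt (2 * pi)) \<le> emeasure (gauss 0 1) {a..<b}"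
proof -
  have "ennreal ((b - a) * exp (-K) / sqrt (2 * pi)) = (\<integral>\<^sup>+x. ennreal (exp (-K) / sqrt (2 * pi)) * indicator {a..<b} x \<partial>lborel)"
    using ab by (subst nn_integral_cmult_indicator) (auto simp: ennreal_mult'[symmetric] mult.commute)
  also have "\<dots> \<le> (\<integral>\<^sup>+x. ennreal (normal_density 0 1 x) * indicator {a..<b} x \<partial>lborel)"
  proof (intro nn_integral_mono)
    fix x show "ennreal (exp (-K) / sqrt (2 * pi)) * indicator {a..<b} x \<le> ennreal (normal_density 0 1 x) * indicator {a..<b} x"
    proof (cases "x \<in> {a..<b}")
      case True
      then have "-K \<le> - x\<^sup>2 / 2" using K[OF True] by simp
      then have "exp (-K) \<le> exp (- x\<^sup>2 / 2)" by simp
      then have "exp (-K) / sqrt (2 * pi) \<le> normal_density 0 1 x"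
        by (simp add: std_normal_density_def divide_right_mono)
      then show ?thesis using True by (simp add: ennreal_leI)
    qed simp
  qed
  also have "\<dots> = emeasure (gauss 0 1) {a..<b}" by (simp add: emeasure_gauss1)
  finally show ?thesis .
qed

lemma gauss1_upper:
  assumes "A \<in> sets borel"
  shows "emeasure (gauss 0 1) A \<le> ennreal (1/2) * emeasure lborel A"
proof -
  have "emeasure (gauss 0 1) A = (\<integral>\<^sup>+x. ennreal (normal_density 0 1 x) * indicator A x \<partial>lborel)"
    using assms by (simp add: emeasure_gauss1)
  also have "\<dots> \<le> (\<integral>\<^sup>+x. ennreal (1/2) * indicator A x \<partial>lborel)"
  proof (intro nn_integral_mono)
    fix x :: real
    have "exp (- x\<^sup>2 / 2) \<le> 1" by simp
    moreover have "2 \<le> sqrt (2 * pi)" using pi_gt3 by (simp add: real_le_rsqrt)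
    moreover have "1 / sqrt (2 * pi) \<le> 1 / (2::real)"
      using \<open>2 \<le> sqrt (2 * pi)\<close> by (intro divide_left_mono) auto
    ultimately have "1 / sqrt (2 * pi) * exp (- x\<^sup>2 / 2) \<le> 1 / 2 * 1"
      by (intro mult_mono) auto
    then have "normal_density 0 1 x \<le> 1/2"
      by (simp add: std_normal_density_def)
    then show "ennreal (normal_density 0 1 x) * indicator A x \<le> ennreal (1/2) * indicator A x"
      by (intro mult_right_mono ennreal_leI) auto
  qed
  also have "\<dots> = ennreal (1/2) * emeasure lborel A"
    using assms by (intro nn_integral_cmult_indicator) auto
  finally show ?thesis .
qed



lemma Q1:
  fixes A B :: "real measure" and I :: "nat set"
  assumes I: "finite I" and A: "prob_space A" and B: "prob_space B"
  defines "N \<equiv> (\<lambda>(i::nat,b::bool). if b then A else B)"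
  shows "distr (PiM I (\<lambda>_. A \<Otimes>\<^sub>M B)) (PiM (I \<times> UNIV) N)
     (\<lambda>\<omega>. \<lambda>(i,b)\<in>I \<times> UNIV. if b then fst (\<omega> i) else snd (\<omega> i)) = PiM (I \<times> UNIV) N"
proof -
  interpret A: prob_space A by fact
  interpret B: prob_space B by fact
  interpret AB: pair_prob_space A B ..
  have pN: "prob_space (N j)" for j using A B by (auto simp: N_def split: prod.splits)
  have PN: "product_sigma_finite N"
    by (intro product_prob_space.axioms(1) product_prob_spaceI pN)
  have PP: "product_sigma_finite (\<lambda>_::nat. A \<Otimes>\<^sub>M B)"
    by (intro product_prob_space.axioms(1) product_prob_spaceI) (simp add: AB.prob_space_axioms)
  let ?P = "PiM I (\<lambda>_. A \<Otimes>\<^sub>M B)"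
  let ?Psi = "\<lambda>\<omega>. \<lambda>(i,b)\<in>I \<times> (UNIV::bool set). if b then fst (\<omega> i) else snd (\<omega> i)"
  have meas: "?Psi \<in> measurable ?P (PiM (I \<times> UNIV) N)"
  proof (rule measurable_restrict)
    fix j assume "j \<in> I \<times> (UNIV :: bool set)"
    then obtain i b where j: "j = (i,b)" "i \<in> I" by auto
    have c: "(\<lambda>\<omega>. \<omega> i) \<in> measurable ?P (A \<Otimes>\<^sub>M B)" by (rule measurable_component_singleton[OF j(2)])
    show "(\<lambda>x. case j of (i, b) \<Rightarrow> if b then fst (x i) else snd (x i)) \<in> measurable ?P (N j)"
    proof (cases b)
      case True then show ?thesis using measurable_compose[OF c measurable_fst] j by (simp add: N_def)
    next
      case False then show ?thesis using measurable_compose[OF c measurable_snd] j by (simp add: N_def)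
    qed
  qed
  show ?thesis
  proof (rule product_sigma_finite.PiM_eqI[OF PN])
    show "finite (I \<times> (UNIV::bool set))" using I by simp
    show "sets (distr ?P (PiM (I \<times> UNIV) N) ?Psi) = sets (PiM (I \<times> UNIV) N)" by simp
    fix C assume C: "\<And>j. j \<in> I \<times> (UNIV::bool set) \<Longrightarrow> C j \<in> sets (N j)"
    have CA: "i \<in> I \<Longrightarrow> C (i,True) \<in> sets A" for i using C[of "(i,True)"] by (simp add: N_def)
    have CB: "i \<in> I \<Longrightarrow> C (i,False) \<in> sets B" for i using C[of "(i,False)"] by (simp add: N_def)
    have pre: "?Psi -` (PiE (I \<times> UNIV) C) \<inter> space ?P = PiE I (\<lambda>i. C (i,True) \<times> C (i,False))"
    proof (intro set_eqI iffI)
      fix \<omega> assume "\<omega> \<in> ?Psi -` (PiE (I \<times> UNIV) C) \<inter> space ?P"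
      then have 1: "\<And>i b. i \<in> I \<Longrightarrow> (if b then fst (\<omega> i) else snd (\<omega> i)) \<in> C (i,b)"
        and 2: "\<omega> \<in> extensional I"
        by (auto simp: space_PiM PiE_iff)
      show "\<omega> \<in> PiE I (\<lambda>i. C (i,True) \<times> C (i,False))"
        using 1[of _ True] 1[of _ False] 2 by (auto simp: PiE_iff mem_Times_iff)
    next
      fix \<omega> assume w: "\<omega> \<in> PiE I (\<lambda>i. C (i,True) \<times> C (i,False))"
      have "\<omega> \<in> space ?P"
        using w CA[THEN sets.sets_into_space] CB[THEN sets.sets_into_space]
        by (auto simp: space_PiM PiE_iff space_pair_measure mem_Times_iff) (meson subsetD)+
      moreover have "?Psi \<omega> \<in> PiE (I \<times> UNIV) C"
        using w by (auto simp: PiE_iff mem_Times_iff)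
      ultimately show "\<omega> \<in> ?Psi -` (PiE (I \<times> UNIV) C) \<inter> space ?P" by simp
    qed
    have "emeasure (distr ?P (PiM (I \<times> UNIV) N) ?Psi) (PiE (I \<times> UNIV) C)
        = emeasure ?P (PiE I (\<lambda>i. C (i,True) \<times> C (i,False)))"
      using meas C by (subst emeasure_distr) (auto simp: pre intro!: sets_PiM_I_finite I)
    also have "\<dots> = (\<Prod>i\<in>I. emeasure (A \<Otimes>\<^sub>M B) (C (i,True) \<times> C (i,False)))"
      using CA CB I by (subst product_sigma_finite.emeasure_PiM[OF PP]) auto
    also have "\<dots> = (\<Prod>i\<in>I. emeasure A (C (i,True)) * emeasure B (C (i,False)))"
      using CA CB by (intro prod.cong refl) (simp add: B.emeasure_pair_measure_Times)
    also have "\<dots> = (\<Prod>i\<in>I. \<Prod>b\<in>(UNIV::bool set). emeasure (N (i,b)) (C (i,b)))"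
      by (intro prod.cong refl) (simp add: UNIV_bool N_def mult.commute)
    also have "\<dots> = (\<Prod>j\<in>I \<times> UNIV. emeasure (N j) (C j))"
      by (simp add: prod.cartesian_product)
    finally show "emeasure (distr ?P (PiM (I \<times> UNIV) N) ?Psi) (PiE (I \<times> UNIV) C) = (\<Prod>j\<in>I \<times> UNIV. emeasure (N j) (C j))" .
  qed
qed

lemma RED:
  fixes A B :: "real measure" and I :: "nat set" and F G :: "(nat \<Rightarrow> real) \<Rightarrow> real"
  assumes I: "finite I" and A: "prob_space A" and B: "prob_space B"
    and F: "F \<in> borel_measurable (PiM I (\<lambda>_. A))" and G: "G \<in> borel_measurable (PiM I (\<lambda>_. B))"
  shows "distr (PiM I (\<lambda>_. A \<Otimes>\<^sub>M B)) (borel \<Otimes>\<^sub>M borel)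
      (\<lambda>\<omega>. (F (\<lambda>i\<in>I. fst (\<omega> i)), G (\<lambda>i\<in>I. snd (\<omega> i))))
    = distr (PiM I (\<lambda>_. A)) borel F \<Otimes>\<^sub>M distr (PiM I (\<lambda>_. B)) borel G"
proof -
  define N where "N = (\<lambda>(i::nat,b::bool). if b then A else B)"
  have NT[simp]: "N (i,True) = A" and NF[simp]: "N (i,False) = B" for i by (simp_all add: N_def)
  interpret A: prob_space A by fact
  interpret B: prob_space B by fact
  interpret AB: pair_prob_space A B ..
  have pN: "prob_space (N j)" for j using A B by (auto simp: N_def split: prod.splits)
  have PN: "product_sigma_finite N"
    by (intro product_prob_space.axioms(1) product_prob_spaceI pN)
  let ?P = "PiM I (\<lambda>_. A \<Otimes>\<^sub>M B)"
  let ?Q = "PiM (I \<times> UNIV) N"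
  let ?Psi = "\<lambda>\<omega>. \<lambda>(i,b)\<in>I \<times> (UNIV::bool set). if b then fst (\<omega> i) else snd (\<omega> i)"
  define J1 where "J1 = I \<times> {True}"
  define J2 where "J2 = I \<times> {False}"
  have J12: "J1 \<union> J2 = I \<times> UNIV" "J1 \<inter> J2 = {}" "finite J1" "finite J2"
    using I by (auto simp: J1_def J2_def)
  define r1 where "r1 = (\<lambda>\<xi>::nat\<times>bool\<Rightarrow>real. \<lambda>i\<in>I. \<xi> (i,True))"
  define r2 where "r2 = (\<lambda>\<xi>::nat\<times>bool\<Rightarrow>real. \<lambda>i\<in>I. \<xi> (i,False))"
  define H where "H = (\<lambda>\<xi>. (F (r1 \<xi>), G (r2 \<xi>)))"
  have Psi_meas: "?Psi \<in> measurable ?P ?Q"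
  proof (rule measurable_restrict)
    fix j assume "j \<in> I \<times> (UNIV :: bool set)"
    then obtain i b where j: "j = (i,b)" "i \<in> I" by auto
    have c: "(\<lambda>\<omega>. \<omega> i) \<in> measurable ?P (A \<Otimes>\<^sub>M B)" by (rule measurable_component_singleton[OF j(2)])
    show "(\<lambda>x. case j of (i, b) \<Rightarrow> if b then fst (x i) else snd (x i)) \<in> measurable ?P (N j)"
    proof (cases b)
      case True then show ?thesis using measurable_compose[OF c measurable_fst] j by simp
    next
      case False then show ?thesis using measurable_compose[OF c measurable_snd] j by simp
    qed
  qed
  have r1m: "r1 \<in> measurable (PiM K N) (PiM I (\<lambda>_. A))" if "I \<times> {True} \<subseteq> K" for K
    unfolding r1_def
  proof (rule measurable_restrict)
    fix i assume "i \<in> I" then have "(i,True) \<in> K" using that by auto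
    from measurable_component_singleton[OF this, of N] show "(\<lambda>x. x (i, True)) \<in> measurable (PiM K N) A" by simp
  qed
  have r2m: "r2 \<in> measurable (PiM K N) (PiM I (\<lambda>_. B))" if "I \<times> {False} \<subseteq> K" for K
    unfolding r2_def
  proof (rule measurable_restrict)
    fix i assume "i \<in> I" then have "(i,False) \<in> K" using that by auto
    from measurable_component_singleton[OF this, of N] show "(\<lambda>x. x (i, False)) \<in> measurable (PiM K N) B" by simp
  qed
  have Hm: "H \<in> measurable ?Q (borel \<Otimes>\<^sub>M borel)"
    unfolding H_def
    by (intro measurable_Pair measurable_compose[OF r1m F] measurable_compose[OF r2m G]) auto
  have step1: "distr ?P (borel \<Otimes>\<^sub>M borel) (\<lambda>\<omega>. (F (\<lambda>i\<in>I. fst (\<omega> i)), G (\<lambda>i\<in>I. snd (\<omega> i))))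
      = distr ?P (borel \<Otimes>\<^sub>M borel) (H \<circ> ?Psi)"
    by (intro distr_cong refl) (simp add: H_def r1_def r2_def restrict_def; intro conjI arg_cong[where f=F] arg_cong[where f=G] ext; simp)
  also have "\<dots> = distr (distr ?P ?Q ?Psi) (borel \<Otimes>\<^sub>M borel) H"
    by (rule distr_distr[OF Hm Psi_meas, symmetric])
  also have "distr ?P ?Q ?Psi = ?Q"
    unfolding N_def by (rule Q1[OF I A B])
  also have "?Q = distr (PiM J1 N \<Otimes>\<^sub>M PiM J2 N) ?Q (merge J1 J2)"
    using product_sigma_finite.distr_merge[OF PN J12(2-4)] J12(1) by simp
  also have "distr (distr (PiM J1 N \<Otimes>\<^sub>M PiM J2 N) ?Q (merge J1 J2)) (borel \<Otimes>\<^sub>M borel) H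
      = distr (PiM J1 N \<Otimes>\<^sub>M PiM J2 N) (borel \<Otimes>\<^sub>M borel) (H \<circ> merge J1 J2)"
    using measurable_merge[of J1 J2 N] J12(1)
    by (intro distr_distr Hm) simp
  also have "\<dots> = distr (PiM J1 N \<Otimes>\<^sub>M PiM J2 N) (borel \<Otimes>\<^sub>M borel) (\<lambda>(x,y). (F (r1 x), G (r2 y)))"
  proof (intro distr_cong refl)
    fix z assume "z \<in> space (PiM J1 N \<Otimes>\<^sub>M PiM J2 N)"
    obtain x y where z: "z = (x,y)" by (cases z)
    have "r1 (merge J1 J2 (x,y)) = r1 x" "r2 (merge J1 J2 (x,y)) = r2 y"
      by (auto simp: r1_def r2_def J1_def J2_def merge_def restrict_def fun_eq_iff)
    then show "(H \<circ> merge J1 J2) z = (case z of (x, y) \<Rightarrow> (F (r1 x), G (r2 y)))"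
      by (simp add: z H_def)
  qed
  also have "\<dots> = distr (PiM J1 N) borel (F \<circ> r1) \<Otimes>\<^sub>M distr (PiM J2 N) borel (G \<circ> r2)"
  proof (subst pair_measure_distr)
    show "F \<circ> r1 \<in> borel_measurable (PiM J1 N)" using r1m[of J1] F by (auto simp: J1_def)
    show "G \<circ> r2 \<in> borel_measurable (PiM J2 N)" using r2m[of J2] G by (auto simp: J2_def)
    have "prob_space (PiM J2 N)" by (intro prob_space_PiM pN)
    then show "sigma_finite_measure (distr (PiM J2 N) borel (G \<circ> r2))"
      using r2m[of J2] G
      by (intro prob_space.prob_space_distr prob_space_imp_sigma_finite) (auto simp: J2_def)
  qed (simp add: case_prod_beta)
  also have "distr (PiM J1 N) borel (F \<circ> r1) = distr (distr (PiM J1 N) (PiM I (\<lambda>_. A)) r1) borel F"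
    using r1m[of J1] F by (intro distr_distr[symmetric]) (auto simp: J1_def)
  also have "distr (PiM J1 N) (PiM I (\<lambda>_. A)) r1 = PiM I (\<lambda>_. A)"
    using distr_PiM_reindex[of J1 N "\<lambda>i. (i,True)" I] pN
    by (simp add: J1_def r1_def inj_on_def)
  also have "distr (PiM J2 N) borel (G \<circ> r2) = distr (distr (PiM J2 N) (PiM I (\<lambda>_. B)) r2) borel G"
    using r2m[of J2] G by (intro distr_distr[symmetric]) (auto simp: J2_def)
  also have "distr (PiM J2 N) (PiM I (\<lambda>_. B)) r2 = PiM I (\<lambda>_. B)"
    using distr_PiM_reindex[of J2 N "\<lambda>i. (i,False)" I] pN
    by (simp add: J2_def r2_def inj_on_def)
  finally show ?thesis .
qed


lemma indep_coords:
  fixes M :: "'i \<Rightarrow> 'a measure"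
  assumes I: "I \<noteq> {}" and M: "\<And>i. i \<in> I \<Longrightarrow> prob_space (M i)"
  shows "prob_space.indep_vars (PiM I M) M (\<lambda>i \<omega>. \<omega> i) I"
proof -
  interpret P: prob_space "PiM I M" by (intro prob_space_PiM M)
  show ?thesis
  proof (subst P.indep_vars_iff_distr_eq_PiM'[OF I])
    show "\<And>i. i \<in> I \<Longrightarrow> (\<lambda>\<omega>::'i\<Rightarrow>'a. \<omega> i) \<in> measurable (PiM I M) (M i)" by (rule measurable_component_singleton)
    have "distr (PiM I M) (PiM I M) (\<lambda>x. \<lambda>i\<in>I. x i) = distr (PiM I M) (PiM I M) (\<lambda>x. x)"
      by (intro distr_cong refl) (auto simp: space_PiM PiE_def extensional_restrict)
    also have "\<dots> = PiM I M" by (rule distr_id)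
    also have "\<dots> = PiM I (\<lambda>i. distr (PiM I M) (M i) (\<lambda>\<omega>. \<omega> i))"
      by (intro PiM_cong refl) (simp add: distr_PiM_component M)
    finally show "distr (PiM I M) (PiM I M) (\<lambda>x. \<lambda>i\<in>I. x i) = PiM I (\<lambda>i. distr (PiM I M) (M i) (\<lambda>\<omega>. \<omega> i))" .
  qed
qed

lemma gauss_sum:
  fixes I :: "nat set"
  assumes I: "finite I" "I \<noteq> {}" and s: "s > 0" and c: "c > 0"
  shows "distr (PiM I (\<lambda>_. gauss 0 s)) borel (\<lambda>x. (\<Sum>i\<in>I. x i) / c) = gauss 0 (s * sqrt (card I) / c)"
proof -
  let ?P = "PiM I (\<lambda>_. gauss 0 s)"
  interpret P: prob_space ?P by (intro prob_space_PiM) (simp add: s)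
  have ind0: "P.indep_vars (\<lambda>_. gauss 0 s) (\<lambda>i \<omega>. \<omega> i) I"
    by (rule indep_coords[OF I(2)]) (simp add: s)
  have ind: "P.indep_vars (\<lambda>_. borel) (\<lambda>i \<omega>. \<omega> i / c) I"
    by (rule P.indep_vars_compose2[OF ind0, where Y="\<lambda>i y. y / c"]) simp
  have d0: "distributed ?P lborel (\<lambda>\<omega>. \<omega> i) (normal_density 0 s)" if i: "i \<in> I" for i
  proof -
    have "distr ?P lborel (\<lambda>\<omega>. \<omega> i) = distr ?P (gauss 0 s) (\<lambda>\<omega>. \<omega> i)"
      by (intro distr_cong) auto
    also have "\<dots> = gauss 0 s" using i s by (intro distr_PiM_component) auto
    finally show ?thesis unfolding distributed_def gauss_def using i by auto
  qed
  have d1: "distributed ?P lborel (\<lambda>\<omega>. \<omega> i / c) (normal_density 0 (s / c))" if i: "i \<in> I" for i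
    using P.normal_density_affine[OF d0[OF i] s, of "1/c" 0] c by (simp add: field_simps)
  have "distributed ?P lborel (\<lambda>x. \<Sum>i\<in>I. x i / c) (normal_density (\<Sum>i\<in>I. 0) (sqrt (\<Sum>i\<in>I. (s / c)\<^sup>2)))"
    by (rule P.sum_indep_normal[OF I ind]) (use s c d1 in auto)
  moreover have "sqrt (\<Sum>i\<in>I. (s / c)\<^sup>2) = s * sqrt (card I) / c"
    using s c by (simp add: real_sqrt_mult power_divide real_sqrt_divide)
  ultimately have "distr ?P lborel (\<lambda>x. \<Sum>i\<in>I. x i / c) = gauss 0 (s * sqrt (card I) / c)"
    by (simp add: distributed_def gauss_def)
  moreover have "distr ?P borel (\<lambda>x. (\<Sum>i\<in>I. x i) / c) = distr ?P lborel (\<lambda>x. \<Sum>i\<in>I. x i / c)"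
    by (intro distr_cong) (auto simp: sum_divide_distrib)
  ultimately show ?thesis by simp
qed



lemma consts1: "1/1000 \<le> (2 * sqrt 2 - 5/2) * exp (-4) / sqrt (2 * pi :: real)"
proof -
  have s2: "7/5 \<le> sqrt (2::real)" by (rule real_le_rsqrt) (simp add: power2_eq_square)
  have e1: "exp (1::real) \<le> 3" by (rule exp_le)
  have "exp (4::real) = exp (of_nat 4 * 1)" by simp
  also have "\<dots> = exp 1 ^ 4" by (rule exp_of_nat_mult)
  also have "\<dots> \<le> 3 ^ 4" by (intro power_mono e1) auto
  finally have e4: "exp (4::real) \<le> 81" by simp
  have em4: "1/81 \<le> exp (-4::real)"
  proof -
    have "inverse (81::real) \<le> inverse (exp 4)" using e4 by (intro le_imp_inverse_le) auto
    then show ?thesis by (simp add: exp_minus inverse_eq_divide)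
  qed
  have sp: "sqrt (2 * pi) \<le> (3::real)"
    using pi_less_4 by (intro real_sqrt_le_iff[THEN iffD2, of _ 9, simplified]) linarith
  have a: "3/10 \<le> 2 * sqrt 2 - (5/2::real)" using s2 by linarith
  have b: "(3/10) * (1/81) \<le> (2 * sqrt 2 - 5/2) * exp (-4::real)"
    by (rule mult_mono[OF a em4]) (use a in auto)
  have c: "0 < sqrt (2 * pi :: real)" by simp
  have "(3/10) * (1/81) / 3 \<le> (2 * sqrt 2 - 5/2) * exp (-4) / sqrt (2 * pi :: real)"
    by (rule frac_le) (use b sp c a in auto)
  moreover have "(3/10) * (1/81) / 3 = (1/810::real)" by simp
  ultimately show ?thesis by linarith
qed

lemma cmp_pt:
  fixes \<sigma> y :: real
  assumes s: "\<sigma> > 0" and y: "y \<le> 0"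
  shows "emeasure (gauss 0 (\<sigma> / sqrt 2)) {..<y} + ennreal (1/1000) * indicator {-5/2*\<sigma>..-2*\<sigma>} y
     \<le> emeasure (gauss 0 \<sigma>) {..<y}"
proof -
  let ?G = "gauss 0 1"
  interpret G: prob_space ?G by simp
  have "emeasure (gauss 0 (\<sigma> / sqrt 2)) {..<y} = emeasure ?G {x. \<sigma> / sqrt 2 * x \<in> {..<y}}"
    using s by (intro gauss_scale) auto
  also have "{x. \<sigma> / sqrt 2 * x \<in> {..<y}} = {..<sqrt 2 * y / \<sigma>}"
    using s by (auto simp: field_simps)
  finally have L: "emeasure (gauss 0 (\<sigma> / sqrt 2)) {..<y} = emeasure ?G {..<sqrt 2 * y / \<sigma>}" .
  have "emeasure (gauss 0 \<sigma>) {..<y} = emeasure ?G {x. \<sigma> * x \<in> {..<y}}"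
    using s by (intro gauss_scale) auto
  also have "{x. \<sigma> * x \<in> {..<y}} = {..<y / \<sigma>}"
    using s by (auto simp: field_simps)
  finally have R: "emeasure (gauss 0 \<sigma>) {..<y} = emeasure ?G {..<y / \<sigma>}" .
  have "1 \<le> sqrt (2::real)" by simp
  from mult_right_mono_neg[OF this y] have "sqrt 2 * y \<le> y" by simp
  then have le: "sqrt 2 * y / \<sigma> \<le> y / \<sigma>"
    using s by (intro divide_right_mono) auto
  have un: "{..<y / \<sigma>} = {..<sqrt 2 * y / \<sigma>} \<union> {sqrt 2 * y / \<sigma>..<y / \<sigma>}"
    using le by auto
  have R2: "emeasure ?G {..<y / \<sigma>} = emeasure ?G {..<sqrt 2 * y / \<sigma>} + emeasure ?G {sqrt 2 * y / \<sigma>..<y / \<sigma>}"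
    unfolding un by (intro plus_emeasure[symmetric]) auto
  have "ennreal (1/1000) * indicator {-5/2*\<sigma>..-2*\<sigma>} y \<le> emeasure ?G {sqrt 2 * y / \<sigma>..<y / \<sigma>}"
  proof (cases "y \<in> {-5/2*\<sigma>..-2*\<sigma>}")
    case True
    have a0: "sqrt 2 * y \<le> sqrt 2 * (-2 * \<sigma>)"
      using True by (intro mult_left_mono) auto
    have a: "sqrt 2 * y / \<sigma> \<le> - 2 * sqrt 2"
      using a0 s by (simp add: pos_divide_le_eq)
    have b: "-5/2 \<le> y / \<sigma>"
      using True s by (auto simp: field_simps)
    have s2: "7/5 \<le> sqrt (2::real)" by (rule real_le_rsqrt) (simp add: power2_eq_square)
    have sub: "{- 2 * sqrt 2..<-5/2} \<subseteq> {sqrt 2 * y / \<sigma>..<y / \<sigma>}"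
      using a b by auto
    have "ennreal (1/1000) \<le> ennreal ((-5/2 - (- 2 * sqrt 2)) * exp (-4) / sqrt (2 * pi))"
      using consts1 by (intro ennreal_leI) simp
    also have "\<dots> \<le> emeasure ?G {- 2 * sqrt 2..<-5/2}"
    proof (rule gauss1_lower)
      show "- 2 * sqrt 2 \<le> (-5/2::real)" using s2 by simp
      fix x :: real assume x: "x \<in> {- 2 * sqrt 2..<-5/2}"
      then have "\<bar>x\<bar> \<le> 2 * sqrt 2" by auto
      then have "\<bar>x\<bar>\<^sup>2 \<le> (2 * sqrt 2)\<^sup>2" by (intro power_mono) auto
      then show "x\<^sup>2 \<le> 2 * 4" by (simp add: power_mult_distrib)
    qed
    also have "\<dots> \<le> emeasure ?G {sqrt 2 * y / \<sigma>..<y / \<sigma>}"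
      by (intro emeasure_mono sub) auto
    finally show ?thesis using True by simp
  qed simp
  then show ?thesis unfolding L R R2 by (intro add_left_mono)
qed

lemma even_pow_lt_iff:
  fixes g y :: real
  assumes m: "even m" "m > 0" and y: "y > 0"
  shows "g ^ m < y \<longleftrightarrow> \<bar>g\<bar> < y powr (1 / real m)"
proof -
  have gm: "g ^ m = \<bar>g\<bar> ^ m" using m by (simp add: power_even_abs)
  have yr: "y = (y powr (1 / real m)) ^ m"
    using y m by (simp add: powr_realpow[symmetric] powr_powr)
  have "\<not> ((y powr (1 / real m)) ^ m \<le> \<bar>g\<bar> ^ m) \<longleftrightarrow> \<not> (y powr (1 / real m) \<le> \<bar>g\<bar>)"
    using m power_mono_iff[of "y powr (1 / real m)" "\<bar>g\<bar>" m] by simp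
  then have "\<bar>g\<bar> ^ m < (y powr (1 / real m)) ^ m \<longleftrightarrow> \<bar>g\<bar> < y powr (1 / real m)"
    by (simp add: not_le)
  then show ?thesis using gm yr by metis
qed

lemma even_pow_le_iff:
  fixes g y :: real
  assumes m: "even m" "m > 0" and y: "y > 0"
  shows "g ^ m \<le> y \<longleftrightarrow> \<bar>g\<bar> \<le> y powr (1 / real m)"
proof -
  have gm: "g ^ m = \<bar>g\<bar> ^ m" using m by (simp add: power_even_abs)
  have yr: "y = (y powr (1 / real m)) ^ m"
    using y m by (simp add: powr_realpow[symmetric] powr_powr)
  have "\<bar>g\<bar> ^ m \<le> (y powr (1 / real m)) ^ m \<longleftrightarrow> \<bar>g\<bar> \<le> y powr (1 / real m)"
    using m by (intro power_mono_iff) auto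
  then show ?thesis using gm yr by metis
qed

lemma small_ball_upper_gen:
  fixes r :: real and S :: "real set"
  assumes r: "r \<ge> 0" and S: "S \<subseteq> {-r..r}" "S \<in> sets borel"
  shows "emeasure (gauss 0 1) S \<le> ennreal r"
proof -
  have "emeasure (gauss 0 1) S \<le> emeasure (gauss 0 1) {-r..r}"
    using S by (intro emeasure_mono) auto
  also have "\<dots> \<le> ennreal (1/2) * emeasure lborel {-r..r}"
    by (intro gauss1_upper) auto
  also have "emeasure lborel {-r..r} = ennreal (2 * r)"
    using r by simp
  also have "ennreal (1/2) * ennreal (2 * r) = ennreal (1/2 * (2 * r))"
    by (rule ennreal_mult'[symmetric]) simp
  finally show ?thesis by simp
qed

lemma small_ball_upper:
  fixes y :: real
  assumes m: "even m" "m > 0" and y: "y \<ge> 0"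
  shows "emeasure (gauss 0 1) {g. g ^ m < y} \<le> ennreal (y powr (1 / real m))"
proof (cases "y = 0")
  case True
  have "0 \<le> g ^ m" for g :: real using zero_le_even_power[OF m(1)] by blast
  then have "{g::real. g ^ m < y} = {}" using True m(1) by (simp add: not_less)
  then show ?thesis by simp
next
  case False
  then have y0: "y > 0" using y by simp
  show ?thesis
  proof (rule small_ball_upper_gen)
    show "0 \<le> y powr (1 / real m)" by simp
    show "{g. g ^ m < y} \<subseteq> {- (y powr (1 / real m))..y powr (1 / real m)}"
    proof
      fix g assume "g \<in> {g. g ^ m < y}"
      then have "\<bar>g\<bar> < y powr (1 / real m)" using even_pow_lt_iff[OF m y0] by simp
      then show "g \<in> {- (y powr (1 / real m))..y powr (1 / real m)}" by (auto simp: abs_less_iff)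
    qed
    show "{g::real. g ^ m < y} \<in> sets borel" by measurable
  qed
qed

lemma small_ball_lower:
  fixes y :: real
  assumes m: "even m" "m > 0" and y: "y > 0" "y \<le> 1"
  shows "ennreal (y powr (1 / real m) / 3) \<le> emeasure (gauss 0 1) {g. g ^ m \<le> y}"
proof -
  define r where "r = y powr (1 / real m)"
  have r0: "r > 0" using y by (simp add: r_def)
  have r1: "r \<le> 1" unfolding r_def using y m by (intro powr_le1) auto
  have "1 + (-(1/2)) \<le> exp (-(1/2)::real)" by (rule exp_ge_add_one_self)
  then have e: "1/2 \<le> exp (-(1/2)::real)" by simp
  have sp: "sqrt (2 * pi) \<le> (3::real)"
    using pi_less_4 by (intro real_sqrt_le_iff[THEN iffD2, of _ 9, simplified]) linarith
  have sp0: "0 < sqrt (2 * pi :: real)" by simp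
  have "r * 1 \<le> (2 * r) * exp (-(1/2))"
    using e r0 by (simp add: mult.assoc)
  then have "r / 3 \<le> (2 * r) * exp (-(1/2)) / sqrt (2 * pi)"
    using sp sp0 r0 by (intro frac_le) auto
  also have "(2 * r) * exp (-(1/2)) / sqrt (2 * pi) = (r - - r) * exp (-(1/2)) / sqrt (2 * pi)" by simp
  finally have "ennreal (r / 3) \<le> ennreal ((r - - r) * exp (-(1/2)) / sqrt (2 * pi))"
    by (intro ennreal_leI)
  also have "\<dots> \<le> emeasure (gauss 0 1) {-r..<r}"
  proof (rule gauss1_lower)
    show "-r \<le> r" using r0 by simp
    fix x :: real assume "x \<in> {-r..<r}"
    then have "\<bar>x\<bar> \<le> 1" using r1 by auto
    then have "\<bar>x\<bar>\<^sup>2 \<le> 1\<^sup>2" by (intro power_mono) auto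
    then show "x\<^sup>2 \<le> 2 * (1/2)" by simp
  qed
  also have "\<dots> \<le> emeasure (gauss 0 1) {g. g ^ m \<le> y}"
  proof (intro emeasure_mono)
    show "{-r..<r} \<subseteq> {g. g ^ m \<le> y}"
    proof
      fix g assume "g \<in> {-r..<r}"
      then have "\<bar>g\<bar> \<le> r" by auto
      then show "g \<in> {g. g ^ m \<le> y}" using even_pow_le_iff[OF m y(1), of g] by (simp add: r_def)
    qed
    show "{g::real. g ^ m \<le> y} \<in> sets (gauss 0 1)" by simp
  qed
  finally show ?thesis by (simp add: r_def)
qed

lemma gauss_second_moment:
  assumes s: "s > 0"
  shows "(\<integral>\<^sup>+z. ennreal (z\<^sup>2) \<partial>gauss 0 s) = ennreal (s\<^sup>2)"
proof -
  have "(\<integral>\<^sup>+z. ennreal (z\<^sup>2) \<partial>gauss 0 s) = (\<integral>\<^sup>+z. ennreal (normal_density 0 s z) * ennreal (z\<^sup>2) \<partial>lborel)"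
    unfolding gauss_def by (subst nn_integral_density) auto
  also have "\<dots> = (\<integral>\<^sup>+z. ennreal (normal_density 0 s z * (z - 0) ^ (2 * 1)) \<partial>lborel)"
    by (intro nn_integral_cong) (simp add: ennreal_mult'[symmetric])
  also have "\<dots> = ennreal (integral\<^sup>L lborel (\<lambda>z. normal_density 0 s z * (z - 0) ^ (2 * 1)))"
    using s by (intro nn_integral_eq_integral integrable_normal_moment AE_I2) auto
  also have "integral\<^sup>L lborel (\<lambda>z. normal_density 0 s z * (z - 0) ^ (2 * 1)) = s\<^sup>2"
    using s by (subst integral_normal_moment_even) (auto simp: power2_eq_square)
  finally show ?thesis .
qed



definition Eset :: "nat \<Rightarrow> real \<Rightarrow> (real \<times> real) set" where
  "Eset m \<sigma> = {p. fst p + snd p ^ m < -2 * \<sigma>}"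

lemma Eset_sets: "sets M1 = sets borel \<Longrightarrow> sets M2 = sets borel \<Longrightarrow> Eset m \<sigma> \<in> sets (M1 \<Otimes>\<^sub>M M2)"
proof -
  assume s: "sets M1 = sets borel" "sets M2 = sets borel"
  have "Eset m \<sigma> \<in> sets (borel \<Otimes>\<^sub>M borel)"
  proof -
    have "{p \<in> space (borel \<Otimes>\<^sub>M borel). fst p + snd p ^ m < -2 * (\<sigma>::real)} \<in> sets (borel \<Otimes>\<^sub>M borel)"
      by measurable
    then show ?thesis by (simp add: Eset_def space_pair_measure)
  qed
  then show ?thesis using sets_pair_measure_cong[OF s] by simp
qed

lemma Zside:
  fixes \<sigma> :: real
  assumes s: "\<sigma> > 0" "\<sigma> \<le> 1" and m: "even m" "m > 0"
  shows "emeasure (gauss 0 (\<sigma> / sqrt 2) \<Otimes>\<^sub>M gauss 0 1) (Eset m \<sigma>) + ennreal (1/1000) * ennreal ((\<sigma>/2) powr (1 / real m) / 3)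
     \<le> emeasure (gauss 0 \<sigma> \<Otimes>\<^sub>M gauss 0 1) (Eset m \<sigma>)"
proof -
  let ?G = "gauss 0 1" and ?GZ = "gauss 0 \<sigma>" and ?GH = "gauss 0 (\<sigma> / sqrt 2)"
  have sH: "\<sigma> / sqrt 2 > 0" using s by simp
  interpret G: prob_space ?G by simp
  interpret GZ: prob_space ?GZ using s by simp
  interpret GH: prob_space ?GH using sH by simp
  interpret PZ: pair_prob_space ?GZ ?G ..
  interpret PH: pair_prob_space ?GH ?G ..
  define S where "S = {g::real. g ^ m \<le> \<sigma> / 2}"
  have S_sets: "S \<in> sets ?G" unfolding S_def by simp
  have EZ: "Eset m \<sigma> \<in> sets (?GZ \<Otimes>\<^sub>M ?G)" by (rule Eset_sets) simp_all
  have EH: "Eset m \<sigma> \<in> sets (?GH \<Otimes>\<^sub>M ?G)" by (rule Eset_sets) simp_all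
  have pre: "(\<lambda>x. (x, g)) -` Eset m \<sigma> = {..< -2 * \<sigma> - g ^ m}" for g
    by (auto simp: Eset_def)
  have fH: "(\<lambda>g. emeasure ?GH ((\<lambda>x. (x, g)) -` Eset m \<sigma>)) \<in> borel_measurable ?G"
    by (rule PH.measurable_emeasure_Pair2[OF EH])
  have "emeasure (?GH \<Otimes>\<^sub>M ?G) (Eset m \<sigma>) + ennreal (1/1000) * emeasure ?G S
      = (\<integral>\<^sup>+g. emeasure ?GH ((\<lambda>x. (x, g)) -` Eset m \<sigma>) \<partial>?G) + (\<integral>\<^sup>+g. ennreal (1/1000) * indicator S g \<partial>?G)"
    by (simp add: PH.emeasure_pair_measure_alt2[OF EH] nn_integral_cmult_indicator[OF S_sets])
  also have "\<dots> = (\<integral>\<^sup>+g. emeasure ?GH ((\<lambda>x. (x, g)) -` Eset m \<sigma>) + ennreal (1/1000) * indicator S g \<partial>?G)"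
    by (rule nn_integral_add[symmetric]) (use fH S_sets in auto)
  also have "\<dots> \<le> (\<integral>\<^sup>+g. emeasure ?GZ ((\<lambda>x. (x, g)) -` Eset m \<sigma>) \<partial>?G)"
  proof (intro nn_integral_mono)
    fix g :: real
    have gm: "0 \<le> g ^ m" using zero_le_even_power[OF m(1)] by blast
    have ind: "indicator S g = (indicator {-5/2*\<sigma>..-2*\<sigma>} (-2 * \<sigma> - g ^ m) :: ennreal)"
      using gm by (auto simp: S_def indicator_def)
    show "emeasure ?GH ((\<lambda>x. (x, g)) -` Eset m \<sigma>) + ennreal (1/1000) * indicator S g
        \<le> emeasure ?GZ ((\<lambda>x. (x, g)) -` Eset m \<sigma>)"
      unfolding pre ind using cmp_pt[OF s(1), of "-2 * \<sigma> - g ^ m"] gm s by simp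
  qed
  also have "\<dots> = emeasure (?GZ \<Otimes>\<^sub>M ?G) (Eset m \<sigma>)"
    by (rule PZ.emeasure_pair_measure_alt2[OF EZ, symmetric])
  finally have main: "emeasure (?GH \<Otimes>\<^sub>M ?G) (Eset m \<sigma>) + ennreal (1/1000) * emeasure ?G S \<le> emeasure (?GZ \<Otimes>\<^sub>M ?G) (Eset m \<sigma>)" .
  have "ennreal ((\<sigma>/2) powr (1 / real m) / 3) \<le> emeasure ?G S"
    unfolding S_def using s by (intro small_ball_lower m) auto
  then have "emeasure (?GH \<Otimes>\<^sub>M ?G) (Eset m \<sigma>) + ennreal (1/1000) * ennreal ((\<sigma>/2) powr (1 / real m) / 3)
     \<le> emeasure (?GH \<Otimes>\<^sub>M ?G) (Eset m \<sigma>) + ennreal (1/1000) * emeasure ?G S"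
    by (intro add_left_mono mult_left_mono) auto
  then show ?thesis using main by (rule order_trans)
qed



lemma powr_le_max:
  fixes x :: real
  assumes x: "0 \<le> x" and m: "m > 0"
  shows "x powr (1 / real m) \<le> max 1 x"
proof (cases "x \<le> 1")
  case True
  then have "x powr (1 / real m) \<le> 1" using x m by (intro powr_le1) auto
  then show ?thesis by simp
next
  case False
  then have "x powr (1 / real m) \<le> x powr 1" using m by (intro powr_mono) auto
  then show ?thesis using False by simp
qed

lemma Cz_bound:
  fixes \<sigma> :: real
  assumes s: "\<sigma> > 0" and m: "m > 0"
  shows "(\<integral>\<^sup>+z. ennreal ((2 * \<bar>z\<bar>) powr (1 / real m)) \<partial>gauss 0 (\<sigma> / sqrt 2)) \<le> ennreal (3/2 * \<sigma> powr (1 / real m))"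
proof -
  let ?a = "\<sigma> powr (1 / real m)"
  have a0: "?a > 0" using s by simp
  have pt: "(2 * \<bar>z\<bar>) powr (1 / real m) \<le> ?a + ?a / \<sigma>\<^sup>2 * z\<^sup>2" for z :: real
  proof -
    define x where "x = 2 * \<bar>z\<bar> / \<sigma>"
    have x0: "0 \<le> x" using s by (simp add: x_def)
    have e1: "2 * \<bar>z\<bar> = \<sigma> * x" using s by (simp add: x_def)
    have e2: "(\<sigma> * x) powr (1 / real m) = ?a * x powr (1 / real m)"
      using s x0 by (subst powr_mult) auto
    have b1: "x powr (1 / real m) \<le> max 1 x"
      using x0 m by (rule powr_le_max)
    have "0 \<le> (\<bar>z\<bar> - \<sigma>)\<^sup>2" by simp
    then have "2 * \<bar>z\<bar> * \<sigma> \<le> \<sigma>\<^sup>2 + z\<^sup>2" by (simp add: power2_eq_square algebra_simps)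
    then have "2 * \<bar>z\<bar> * \<sigma> / \<sigma>\<^sup>2 \<le> (\<sigma>\<^sup>2 + z\<^sup>2) / \<sigma>\<^sup>2"
      using s by (intro divide_right_mono) auto
    moreover have "2 * \<bar>z\<bar> * \<sigma> / \<sigma>\<^sup>2 = x" using s by (simp add: x_def power2_eq_square)
    moreover have "(\<sigma>\<^sup>2 + z\<^sup>2) / \<sigma>\<^sup>2 = 1 + z\<^sup>2 / \<sigma>\<^sup>2" using s by (simp add: add_divide_distrib)
    ultimately have b2: "x \<le> 1 + z\<^sup>2 / \<sigma>\<^sup>2" by simp
    have b3: "max 1 x \<le> 1 + z\<^sup>2 / \<sigma>\<^sup>2" using b2 by simp
    have "x powr (1 / real m) \<le> 1 + z\<^sup>2 / \<sigma>\<^sup>2" using b1 b3 by linarith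
    then have "?a * x powr (1 / real m) \<le> ?a * (1 + z\<^sup>2 / \<sigma>\<^sup>2)"
      using a0 by (intro mult_left_mono) auto
    also have "?a * (1 + z\<^sup>2 / \<sigma>\<^sup>2) = ?a + ?a / \<sigma>\<^sup>2 * z\<^sup>2" by (simp add: algebra_simps)
    finally show ?thesis using e1 e2 by simp
  qed
  interpret GH: prob_space "gauss 0 (\<sigma> / sqrt 2)" using s by simp
  have "(\<integral>\<^sup>+z. ennreal ((2 * \<bar>z\<bar>) powr (1 / real m)) \<partial>gauss 0 (\<sigma> / sqrt 2))
      \<le> (\<integral>\<^sup>+z. ennreal ?a + ennreal (?a / \<sigma>\<^sup>2) * ennreal (z\<^sup>2) \<partial>gauss 0 (\<sigma> / sqrt 2))"
  proof (intro nn_integral_mono)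
    fix z :: real
    have "ennreal ((2 * \<bar>z\<bar>) powr (1 / real m)) \<le> ennreal (?a + ?a / \<sigma>\<^sup>2 * z\<^sup>2)"
      by (intro ennreal_leI pt)
    also have "\<dots> = ennreal ?a + ennreal (?a / \<sigma>\<^sup>2 * z\<^sup>2)"
      using a0 s by (intro ennreal_plus) auto
    also have "ennreal (?a / \<sigma>\<^sup>2 * z\<^sup>2) = ennreal (?a / \<sigma>\<^sup>2) * ennreal (z\<^sup>2)"
      using a0 s by (intro ennreal_mult) auto
    finally show "ennreal ((2 * \<bar>z\<bar>) powr (1 / real m)) \<le> ennreal ?a + ennreal (?a / \<sigma>\<^sup>2) * ennreal (z\<^sup>2)" .
  qed
  also have "\<dots> = (\<integral>\<^sup>+z. ennreal ?a \<partial>gauss 0 (\<sigma> / sqrt 2)) + (\<integral>\<^sup>+z. ennreal (?a / \<sigma>\<^sup>2) * ennreal (z\<^sup>2) \<partial>gauss 0 (\<sigma> / sqrt 2))"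
    by (rule nn_integral_add) auto
  also have "(\<integral>\<^sup>+z. ennreal ?a \<partial>gauss 0 (\<sigma> / sqrt 2)) = ennreal ?a"
    using GH.emeasure_space_1 by simp
  also have "(\<integral>\<^sup>+z. ennreal (?a / \<sigma>\<^sup>2) * ennreal (z\<^sup>2) \<partial>gauss 0 (\<sigma> / sqrt 2))
      = ennreal (?a / \<sigma>\<^sup>2) * (\<integral>\<^sup>+z. ennreal (z\<^sup>2) \<partial>gauss 0 (\<sigma> / sqrt 2))"
    by (rule nn_integral_cmult) auto
  also have "(\<integral>\<^sup>+z. ennreal (z\<^sup>2) \<partial>gauss 0 (\<sigma> / sqrt 2)) = ennreal ((\<sigma> / sqrt 2)\<^sup>2)"
    using s by (intro gauss_second_moment) simp
  also have "ennreal (?a / \<sigma>\<^sup>2) * ennreal ((\<sigma> / sqrt 2)\<^sup>2) = ennreal (?a / \<sigma>\<^sup>2 * (\<sigma> / sqrt 2)\<^sup>2)"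
    using a0 s by (intro ennreal_mult[symmetric]) auto
  also have "ennreal ?a + \<dots> = ennreal (?a + ?a / \<sigma>\<^sup>2 * (\<sigma> / sqrt 2)\<^sup>2)"
    using a0 s by (intro ennreal_plus[symmetric]) auto
  also have "?a + ?a / \<sigma>\<^sup>2 * (\<sigma> / sqrt 2)\<^sup>2 = 3/2 * ?a"
  proof -
    have h: "(\<sigma> / sqrt 2)\<^sup>2 = \<sigma>\<^sup>2 / 2" by (simp add: power_divide)
    have "?a / \<sigma>\<^sup>2 * (\<sigma>\<^sup>2 / 2) = ?a / 2" using s by (simp add: field_simps)
    then show ?thesis unfolding h by linarith
  qed
  finally show ?thesis .
qed



lemma Xside:
  fixes \<sigma> s e :: real and LU :: "real measure"
  assumes sg: "\<sigma> > 0" and m: "even m" "m > 0"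
    and LU: "prob_space LU" and sLU: "sets LU = sets borel"
    and s: "s \<ge> 0" and e: "e \<ge> 0"
    and h1: "emeasure LU {u. u \<noteq> 0} \<le> ennreal s"
    and h2: "(\<integral>\<^sup>+u. indicator {u. u \<noteq> 0} u * ennreal ((2 * \<bar>u\<bar>) powr (1 / real m)) \<partial>LU) \<le> ennreal e"
  shows "emeasure (distr (LU \<Otimes>\<^sub>M gauss 0 (\<sigma> / sqrt 2)) borel (\<lambda>(u,z). u + z) \<Otimes>\<^sub>M gauss 0 1) (Eset m \<sigma>)
     \<le> emeasure (gauss 0 (\<sigma> / sqrt 2) \<Otimes>\<^sub>M gauss 0 1) (Eset m \<sigma>) + ennreal e + ennreal s * ennreal (3/2 * \<sigma> powr (1 / real m))"
proof -
  let ?G = "gauss 0 1" and ?GH = "gauss 0 (\<sigma> / sqrt 2)"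
  let ?LA = "distr (LU \<Otimes>\<^sub>M ?GH) borel (\<lambda>(u,z). u + z)"
  let ?E = "Eset m \<sigma>"
  have sH: "\<sigma> / sqrt 2 > 0" using sg by simp
  note [measurable_cong] = sLU
  interpret G: prob_space ?G by simp
  interpret GH: prob_space ?GH using sH by simp
  interpret LU: prob_space LU by fact
  interpret P: pair_prob_space LU ?GH ..
  interpret PH: pair_prob_space ?GH ?G ..
  define R where "R = emeasure (?GH \<Otimes>\<^sub>M ?G) ?E"
  define Cz where "Cz = (\<integral>\<^sup>+z. ennreal ((2 * \<bar>z\<bar>) powr (1 / real m)) \<partial>?GH)"
  define f where "f = (\<lambda>x. emeasure ?G (Pair x -` ?E))"
  have EA: "?E \<in> sets (?LA \<Otimes>\<^sub>M ?G)" by (rule Eset_sets) simp_all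
  have EH: "?E \<in> sets (?GH \<Otimes>\<^sub>M ?G)" by (rule Eset_sets) simp_all
  have EB: "?E \<in> sets (borel \<Otimes>\<^sub>M ?G)" by (rule Eset_sets) simp_all
  have fm: "f \<in> borel_measurable borel"
    unfolding f_def by (rule G.measurable_emeasure_Pair[OF EB])
  have addm: "(\<lambda>(u,z). u + z) \<in> measurable (LU \<Otimes>\<^sub>M ?GH) (borel :: real measure)"
    by measurable
  have "emeasure (?LA \<Otimes>\<^sub>M ?G) ?E = (\<integral>\<^sup>+x. f x \<partial>?LA)"
    unfolding f_def by (rule G.emeasure_pair_measure_alt[OF EA])
  also have "\<dots> = (\<integral>\<^sup>+p. f ((\<lambda>(u,z). u + z) p) \<partial>(LU \<Otimes>\<^sub>M ?GH))"
    by (rule nn_integral_distr[OF addm]) (use fm in simp)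
  also have "\<dots> = (\<integral>\<^sup>+u. \<integral>\<^sup>+z. f (u + z) \<partial>?GH \<partial>LU)"
  proof -
    have "(\<lambda>p. f ((\<lambda>(u,z). u + z) p)) \<in> borel_measurable (LU \<Otimes>\<^sub>M ?GH)"
      using measurable_compose[OF addm fm] by (simp add: comp_def)
    from GH.nn_integral_fst[OF this] show ?thesis by simp
  qed
  also have "\<dots> \<le> (\<integral>\<^sup>+u. R * indicator {0} u + (indicator {u. u \<noteq> 0} u * ennreal ((2 * \<bar>u\<bar>) powr (1 / real m))
        + Cz * indicator {u. u \<noteq> 0} u) \<partial>LU)"
  proof (intro nn_integral_mono)
    fix u :: real
    show "(\<integral>\<^sup>+z. f (u + z) \<partial>?GH) \<le> R * indicator {0} u + (indicator {u. u \<noteq> 0} u * ennreal ((2 * \<bar>u\<bar>) powr (1 / real m))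
        + Cz * indicator {u. u \<noteq> 0} u)"
    proof (cases "u = 0")
      case True
      have "(\<integral>\<^sup>+z. f (u + z) \<partial>?GH) = R"
        unfolding R_def f_def True by (simp add: G.emeasure_pair_measure_alt[OF EH])
      then show ?thesis using True by simp
    next
      case False
      have pt: "f (u + z) \<le> ennreal ((2 * \<bar>u\<bar>) powr (1 / real m)) + ennreal ((2 * \<bar>z\<bar>) powr (1 / real m))" for z
      proof -
        have sub: "Pair (u + z) -` ?E \<subseteq> {g. g ^ m < 2 * \<bar>u\<bar>} \<union> {g. g ^ m < 2 * \<bar>z\<bar>}"
        proof
          fix g assume "g \<in> Pair (u + z) -` ?E"
          then have "u + z + g ^ m < -2 * \<sigma>" by (simp add: Eset_def)
          then have "g ^ m < \<bar>u\<bar> + \<bar>z\<bar>" using sg by (smt (verit) abs_ge_self abs_minus_cancel abs_ge_minus_self)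
          then show "g \<in> {g. g ^ m < 2 * \<bar>u\<bar>} \<union> {g. g ^ m < 2 * \<bar>z\<bar>}" by auto
        qed
        have "f (u + z) \<le> emeasure ?G ({g. g ^ m < 2 * \<bar>u\<bar>} \<union> {g. g ^ m < 2 * \<bar>z\<bar>})"
          unfolding f_def by (intro emeasure_mono sub) simp
        also have "\<dots> \<le> emeasure ?G {g. g ^ m < 2 * \<bar>u\<bar>} + emeasure ?G {g. g ^ m < 2 * \<bar>z\<bar>}"
          by (intro emeasure_subadditive) auto
        also have "\<dots> \<le> ennreal ((2 * \<bar>u\<bar>) powr (1 / real m)) + ennreal ((2 * \<bar>z\<bar>) powr (1 / real m))"
          by (intro add_mono small_ball_upper m) auto
        finally show ?thesis .
      qed
      have "(\<integral>\<^sup>+z. f (u + z) \<partial>?GH) \<le> (\<integral>\<^sup>+z. ennreal ((2 * \<bar>u\<bar>) powr (1 / real m)) + ennreal ((2 * \<bar>z\<bar>) powr (1 / real m)) \<partial>?GH)"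
        by (intro nn_integral_mono pt)
      also have "\<dots> = (\<integral>\<^sup>+z. ennreal ((2 * \<bar>u\<bar>) powr (1 / real m)) \<partial>?GH) + Cz"
        unfolding Cz_def by (rule nn_integral_add) auto
      also have "(\<integral>\<^sup>+z. ennreal ((2 * \<bar>u\<bar>) powr (1 / real m)) \<partial>?GH) = ennreal ((2 * \<bar>u\<bar>) powr (1 / real m))"
        using GH.emeasure_space_1 by simp
      finally show ?thesis using False by simp
    qed
  qed
  also have "\<dots> = (\<integral>\<^sup>+u. R * indicator {0} u \<partial>LU) + ((\<integral>\<^sup>+u. indicator {u. u \<noteq> 0} u * ennreal ((2 * \<bar>u\<bar>) powr (1 / real m)) \<partial>LU)
        + (\<integral>\<^sup>+u. Cz * indicator {u. u \<noteq> 0} u \<partial>LU))"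
    by (subst nn_integral_add, simp, simp, subst nn_integral_add) auto
  also have "\<dots> = R * emeasure LU {0} + ((\<integral>\<^sup>+u. indicator {u. u \<noteq> 0} u * ennreal ((2 * \<bar>u\<bar>) powr (1 / real m)) \<partial>LU)
        + Cz * emeasure LU {u. u \<noteq> 0})"
    by (simp add: nn_integral_cmult_indicator)
  also have "\<dots> \<le> R * 1 + (ennreal e + ennreal (3/2 * \<sigma> powr (1 / real m)) * ennreal s)"
  proof (intro add_mono mult_mono h2 h1)
    show "emeasure LU {0} \<le> 1" by (rule LU.emeasure_le_1)
    show "Cz \<le> ennreal (3/2 * \<sigma> powr (1 / real m))" unfolding Cz_def by (rule Cz_bound[OF sg m(2)])
  qed auto
  finally show ?thesis unfolding R_def by (simp add: ac_simps)
qed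



lemma U_facts:
  fixes nu \<sigma> :: real
  defines "p \<equiv> \<sigma> powr (2 * nu / (nu - 2))"
  defines "x0 \<equiv> \<sigma> / sqrt (6 * p)"
  assumes sg: "\<sigma> > 0" and p3: "3 * p \<le> 1"
  shows "set_pmf (U_pmf nu \<sigma>) \<subseteq> {- x0, 0, 2 * x0}"
    and "emeasure (measure_pmf (U_pmf nu \<sigma>)) {u. u \<noteq> 0} = ennreal (3 * p)"
    and "x0 > 0"
proof -
  have p0: "p > 0" using sg by (simp add: p_def)
  show x0: "x0 > 0" using sg p0 by (simp add: x0_def)
  let ?xs = "[(- x0, 2 * p), (0, 1 - 3 * p), (2 * x0, p)]"
  have U: "U_pmf nu \<sigma> = pmf_of_list ?xs"
    by (simp add: U_pmf_def Let_def p_def x0_def)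
  have wf: "pmf_of_list_wf ?xs"
    using p0 p3 by (intro pmf_of_list_wfI) auto
  show "set_pmf (U_pmf nu \<sigma>) \<subseteq> {- x0, 0, 2 * x0}"
    unfolding U using set_pmf_of_list[OF wf] by auto
  have pm0: "pmf (U_pmf nu \<sigma>) 0 = 1 - 3 * p"
    unfolding U using x0 by (simp add: pmf_pmf_of_list[OF wf])
  have "measure (measure_pmf (U_pmf nu \<sigma>)) {u. u \<noteq> 0} = measure (measure_pmf (U_pmf nu \<sigma>)) (space (measure_pmf (U_pmf nu \<sigma>)) - {0})"
    by (intro arg_cong[where f="measure _"]) auto
  also have "\<dots> = 1 - measure (measure_pmf (U_pmf nu \<sigma>)) {0}"
    by (subst measure_pmf.prob_compl) auto
  also have "\<dots> = 3 * p" using pm0 by (simp add: measure_pmf_single)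
  finally show "emeasure (measure_pmf (U_pmf nu \<sigma>)) {u. u \<noteq> 0} = ennreal (3 * p)"
    by (simp add: measure_pmf.emeasure_eq_measure)
qed

lemma coord_indicator_integral:
  fixes M :: "real measure" and I :: "nat set"
  assumes I: "finite I" and M: "prob_space M" and A: "A \<in> sets M"
  shows "(\<integral>\<^sup>+x. (\<Sum>i\<in>I. indicator A (x i)) \<partial>PiM I (\<lambda>_. M)) = of_nat (card I) * emeasure M A"
proof -
  have "(\<integral>\<^sup>+x. (\<Sum>i\<in>I. indicator A (x i)) \<partial>PiM I (\<lambda>_. M)) = (\<Sum>i\<in>I. \<integral>\<^sup>+x. indicator A (x i) \<partial>PiM I (\<lambda>_. M))"
    using A by (intro nn_integral_sum) auto
  also have "\<dots> = (\<Sum>i\<in>I. emeasure M A)"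
  proof (intro sum.cong refl)
    fix i assume i: "i \<in> I"
    have cm: "(\<lambda>x. x i) \<in> measurable (PiM I (\<lambda>_. M)) M"
      by (rule measurable_component_singleton[OF i])
    have "(\<integral>\<^sup>+x. indicator A (x i) \<partial>PiM I (\<lambda>_. M)) = (\<integral>\<^sup>+y. indicator A y \<partial>distr (PiM I (\<lambda>_. M)) M (\<lambda>x. x i))"
      using A by (subst nn_integral_distr[OF cm]) auto
    also have "distr (PiM I (\<lambda>_. M)) M (\<lambda>x. x i) = M"
      using i M by (intro distr_PiM_component) auto
    finally show "(\<integral>\<^sup>+x. indicator A (x i) \<partial>PiM I (\<lambda>_. M)) = emeasure M A"
      using A by simp
  qed
  also have "\<dots> = of_nat (card I) * emeasure M A" by simp
  finally show ?thesis .
qed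



lemma pw_real_bound:
  fixes x :: "nat \<Rightarrow> real" and I :: "nat set" and x0 c \<sigma> :: real
  assumes I: "finite I" and x: "\<And>i. i \<in> I \<Longrightarrow> x i \<in> {- x0, 0, 2 * x0}"
    and x0: "x0 > 0" and c: "c > 0" and sg: "\<sigma> > 0" and m: "m > 0"
    and nz: "(\<Sum>i\<in>I. x i) / c \<noteq> 0"
  shows "(2 * \<bar>(\<Sum>i\<in>I. x i) / c\<bar>) powr (1 / real m)
     \<le> \<sigma> powr (1 / real m) * (1 + 4 * x0 / (\<sigma> * c)) * (\<Sum>i\<in>I. indicator {u. u \<noteq> 0} (x i))"
proof -
  define Nr where "Nr = (\<Sum>i\<in>I. indicator {u. u \<noteq> 0} (x i) :: real)"
  define K where "K = 4 * x0 / (\<sigma> * c)"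
  have K0: "K > 0" using x0 c sg by (simp add: K_def)
  have xi: "\<bar>x i\<bar> \<le> 2 * x0 * indicator {u. u \<noteq> 0} (x i)" if "i \<in> I" for i
    using x[OF that] x0 by (auto simp: indicator_def)
  have "\<bar>\<Sum>i\<in>I. x i\<bar> \<le> (\<Sum>i\<in>I. \<bar>x i\<bar>)" by (rule sum_abs)
  also have "\<dots> \<le> (\<Sum>i\<in>I. 2 * x0 * indicator {u. u \<noteq> 0} (x i))" by (intro sum_mono xi)
  also have "\<dots> = 2 * x0 * Nr" by (simp add: Nr_def sum_distrib_left)
  finally have sb: "\<bar>\<Sum>i\<in>I. x i\<bar> \<le> 2 * x0 * Nr" .
  have "\<exists>i\<in>I. x i \<noteq> 0"
  proof (rule ccontr)
    assume "\<not> ?thesis" then have "(\<Sum>i\<in>I. x i) = 0" by simp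
    with nz show False by simp
  qed
  then obtain i where i: "i \<in> I" "x i \<noteq> 0" by blast
  have N1: "1 \<le> Nr"
  proof -
    have "indicator {u. u \<noteq> 0} (x i) \<le> Nr" unfolding Nr_def
      using i I by (intro member_le_sum) auto
    then show ?thesis using i by simp
  qed
  have "2 * \<bar>(\<Sum>i\<in>I. x i) / c\<bar> = 2 * \<bar>\<Sum>i\<in>I. x i\<bar> / c" using c by simp
  also have "\<dots> \<le> 2 * (2 * x0 * Nr) / c"
  proof -
    have "2 * \<bar>\<Sum>i\<in>I. x i\<bar> \<le> 2 * (2 * x0 * Nr)" using sb by linarith
    then show ?thesis using c by (intro divide_right_mono) auto
  qed
  also have "\<dots> = \<sigma> * (K * Nr)" using sg c by (simp add: K_def field_simps)
  finally have b1: "2 * \<bar>(\<Sum>i\<in>I. x i) / c\<bar> \<le> \<sigma> * (K * Nr)" .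
  have "(2 * \<bar>(\<Sum>i\<in>I. x i) / c\<bar>) powr (1 / real m) \<le> (\<sigma> * (K * Nr)) powr (1 / real m)"
    by (intro powr_mono2 b1) auto
  also have "\<dots> = \<sigma> powr (1 / real m) * (K * Nr) powr (1 / real m)"
    using sg K0 N1 by (subst powr_mult) auto
  also have "(K * Nr) powr (1 / real m) \<le> max 1 (K * Nr)"
    using K0 N1 m by (intro powr_le_max) auto
  also have "max 1 (K * Nr) \<le> (1 + K) * Nr"
  proof -
    have "0 \<le> K * Nr" using K0 N1 by simp
    moreover have "(1 + K) * Nr = Nr + K * Nr" by (simp add: algebra_simps)
    ultimately show ?thesis using N1 by (simp add: max_def)
  qed
  finally have "(2 * \<bar>(\<Sum>i\<in>I. x i) / c\<bar>) powr (1 / real m) \<le> \<sigma> powr (1 / real m) * ((1 + K) * Nr)"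
    using sg by (simp add: mult_left_mono)
  then show ?thesis by (simp add: K_def Nr_def mult.assoc)
qed



lemma LU_bounds:
  fixes nu \<sigma> c :: real and I :: "nat set" and m :: nat
  defines "p \<equiv> \<sigma> powr (2 * nu / (nu - 2))"
  defines "x0 \<equiv> \<sigma> / sqrt (6 * p)"
  defines "LU \<equiv> distr (PiM I (\<lambda>_. measure_pmf (U_pmf nu \<sigma>))) borel (\<lambda>x. (\<Sum>i\<in>I. x i) / c)"
  assumes sg: "\<sigma> > 0" and p3: "3 * p \<le> 1" and I: "finite I" and c: "c > 0" and m: "m > 0"
  shows "emeasure LU {u. u \<noteq> 0} \<le> ennreal (3 * p * card I)"
    and "(\<integral>\<^sup>+u. indicator {u. u \<noteq> 0} u * ennreal ((2 * \<bar>u\<bar>) powr (1 / real m)) \<partial>LU)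
       \<le> ennreal (\<sigma> powr (1 / real m) * (1 + 4 * x0 / (\<sigma> * c)) * (3 * p * card I))"
proof -
  let ?U = "measure_pmf (U_pmf nu \<sigma>)"
  let ?PU = "PiM I (\<lambda>_. ?U)"
  define S where "S = (\<lambda>x::nat \<Rightarrow> real. (\<Sum>i\<in>I. x i) / c)"
  have p0: "p > 0" using sg by (simp add: p_def)
  note UF = U_facts[OF sg p3[unfolded p_def], folded p_def, folded x0_def]
  have cm: "(\<lambda>x. x i) \<in> borel_measurable ?PU" if i: "i \<in> I" for i
  proof -
    have "(\<lambda>y::real. y) \<in> measurable ?U borel" by simp
    from measurable_compose[OF measurable_component_singleton[OF i] this] show ?thesis .
  qed
  have Sm: "S \<in> borel_measurable ?PU" unfolding S_def
    by (intro borel_measurable_divide borel_measurable_sum cm) auto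
  have Nint: "(\<integral>\<^sup>+x. (\<Sum>i\<in>I. indicator {u. u \<noteq> 0} (x i)) \<partial>?PU) = ennreal (3 * p * card I)"
  proof -
    have "(\<integral>\<^sup>+x. (\<Sum>i\<in>I. indicator {u. u \<noteq> 0} (x i)) \<partial>?PU) = of_nat (card I) * emeasure ?U {u. u \<noteq> 0}"
      using I by (intro coord_indicator_integral) (auto simp: measure_pmf.prob_space_axioms)
    also have "\<dots> = ennreal (3 * p * card I)"
      using UF(2) p0 by (simp add: ennreal_of_nat_eq_real_of_nat ennreal_mult'[symmetric] mult.commute)
    finally show ?thesis .
  qed
  have nzs: "{u::real. u \<noteq> 0} \<in> sets borel"
  proof -
    have "{u::real. u \<noteq> 0} = UNIV - {0}" by auto
    then show ?thesis by simp
  qed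
  have "emeasure LU {u. u \<noteq> 0} = (\<integral>\<^sup>+u. indicator {u. u \<noteq> 0} u \<partial>LU)"
    using nzs by (intro nn_integral_indicator[symmetric]) (simp add: LU_def)
  also have "\<dots> = (\<integral>\<^sup>+x. indicator {u. u \<noteq> 0} (S x) \<partial>?PU)"
    unfolding LU_def S_def by (subst nn_integral_distr) (auto intro: Sm[unfolded S_def])
  also have "\<dots> \<le> (\<integral>\<^sup>+x. (\<Sum>i\<in>I. indicator {u. u \<noteq> 0} (x i)) \<partial>?PU)"
  proof (intro nn_integral_mono)
    fix x :: "nat \<Rightarrow> real"
    show "indicator {u. u \<noteq> 0} (S x) \<le> (\<Sum>i\<in>I. indicator {u. u \<noteq> 0} (x i) :: ennreal)"
    proof (cases "S x = 0")
      case False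
      have "\<exists>i\<in>I. x i \<noteq> 0"
      proof (rule ccontr)
        assume "\<not> ?thesis" then have "S x = 0" by (simp add: S_def)
        with False show False by simp
      qed
      then obtain i where i: "i \<in> I" "x i \<noteq> 0" by blast
      have "indicator {u. u \<noteq> 0} (x i) \<le> (\<Sum>i\<in>I. indicator {u. u \<noteq> 0} (x i) :: ennreal)"
        using i I by (intro member_le_sum) auto
      then show ?thesis using i False by simp
    qed simp
  qed
  also have "\<dots> = ennreal (3 * p * card I)" by (rule Nint)
  finally show "emeasure LU {u. u \<noteq> 0} \<le> ennreal (3 * p * card I)" .
  define C where "C = \<sigma> powr (1 / real m) * (1 + 4 * x0 / (\<sigma> * c))"
  have C0: "C \<ge> 0" using sg c UF(3) by (simp add: C_def)
  have AE: "AE x in ?PU. \<forall>i\<in>I. x i \<in> set_pmf (U_pmf nu \<sigma>)"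
    using I by (intro eventually_ball_finite ballI AE_PiM_component) (auto simp: AE_measure_pmf measure_pmf.prob_space_axioms)
  have "(\<integral>\<^sup>+u. indicator {u. u \<noteq> 0} u * ennreal ((2 * \<bar>u\<bar>) powr (1 / real m)) \<partial>LU)
      = (\<integral>\<^sup>+x. indicator {u. u \<noteq> 0} (S x) * ennreal ((2 * \<bar>S x\<bar>) powr (1 / real m)) \<partial>?PU)"
    unfolding LU_def S_def by (subst nn_integral_distr) (auto intro: Sm[unfolded S_def])
  also have "\<dots> \<le> (\<integral>\<^sup>+x. ennreal C * (\<Sum>i\<in>I. indicator {u. u \<noteq> 0} (x i)) \<partial>?PU)"
  proof (intro nn_integral_mono_AE, use AE in \<open>eventually_elim\<close>)
    fix x :: "nat \<Rightarrow> real" assume x: "\<forall>i\<in>I. x i \<in> set_pmf (U_pmf nu \<sigma>)"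
    show "indicator {u. u \<noteq> 0} (S x) * ennreal ((2 * \<bar>S x\<bar>) powr (1 / real m))
        \<le> ennreal C * (\<Sum>i\<in>I. indicator {u. u \<noteq> 0} (x i))"
    proof (cases "S x = 0")
      case False
      have xs: "\<And>i. i \<in> I \<Longrightarrow> x i \<in> {- x0, 0, 2 * x0}" using x UF(1) by auto
      have "(2 * \<bar>S x\<bar>) powr (1 / real m) \<le> C * (\<Sum>i\<in>I. indicator {u. u \<noteq> 0} (x i))"
        unfolding C_def S_def using pw_real_bound[OF I xs UF(3) c sg m] False by (simp add: S_def)
      then have "ennreal ((2 * \<bar>S x\<bar>) powr (1 / real m)) \<le> ennreal (C * (\<Sum>i\<in>I. indicator {u. u \<noteq> 0} (x i)))"
        by (rule ennreal_leI)
      also have "\<dots> = ennreal C * (\<Sum>i\<in>I. indicator {u. u \<noteq> 0} (x i))"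
        using C0 by (simp add: ennreal_mult ennreal_indicator[symmetric] sum_nonneg)
      finally show ?thesis using False by simp
    qed simp
  qed
  also have "\<dots> = ennreal C * ennreal (3 * p * card I)"
    by (subst nn_integral_cmult) (auto simp: Nint)
  also have "\<dots> = ennreal (C * (3 * p * card I))"
    using C0 p0 by (simp add: ennreal_mult)
  finally show "(\<integral>\<^sup>+u. indicator {u. u \<noteq> 0} u * ennreal ((2 * \<bar>u\<bar>) powr (1 / real m)) \<partial>LU)
       \<le> ennreal (\<sigma> powr (1 / real m) * (1 + 4 * x0 / (\<sigma> * c)) * (3 * p * card I))"
    by (simp add: C_def)
qed



lemma RED_measure:
  fixes A B :: "real measure" and I :: "nat set" and F G :: "(nat \<Rightarrow> real) \<Rightarrow> real"
  assumes I: "finite I" and A: "prob_space A" and B: "prob_space B"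
    and F: "F \<in> borel_measurable (PiM I (\<lambda>_. A))" and G: "G \<in> borel_measurable (PiM I (\<lambda>_. B))"
    and E: "E \<in> sets (borel \<Otimes>\<^sub>M borel)"
  shows "measure (PiM I (\<lambda>_. A \<Otimes>\<^sub>M B)) ((\<lambda>\<omega>. (F (\<lambda>i\<in>I. fst (\<omega> i)), G (\<lambda>i\<in>I. snd (\<omega> i)))) -` E \<inter> space (PiM I (\<lambda>_. A \<Otimes>\<^sub>M B)))
    = measure (distr (PiM I (\<lambda>_. A)) borel F \<Otimes>\<^sub>M distr (PiM I (\<lambda>_. B)) borel G) E"
proof -
  let ?P = "PiM I (\<lambda>_. A \<Otimes>\<^sub>M B)"
  let ?Phi = "\<lambda>\<omega>. (F (\<lambda>i\<in>I. fst (\<omega> i)), G (\<lambda>i\<in>I. snd (\<omega> i)))"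
  have fm: "(\<lambda>\<omega>. \<lambda>i\<in>I. fst (\<omega> i)) \<in> measurable ?P (PiM I (\<lambda>_. A))"
  proof (rule measurable_restrict)
    fix i assume i: "i \<in> I"
    show "(\<lambda>\<omega>. fst (\<omega> i)) \<in> measurable ?P A"
    proof -
      have c: "(\<lambda>\<omega>. \<omega> i) \<in> measurable ?P (A \<Otimes>\<^sub>M B)" by (rule measurable_component_singleton[OF i])
      show ?thesis using measurable_compose[OF c measurable_fst] by simp
    qed
  qed
  have sm: "(\<lambda>\<omega>. \<lambda>i\<in>I. snd (\<omega> i)) \<in> measurable ?P (PiM I (\<lambda>_. B))"
  proof (rule measurable_restrict)
    fix i assume i: "i \<in> I"
    show "(\<lambda>\<omega>. snd (\<omega> i)) \<in> measurable ?P B"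
    proof -
      have c: "(\<lambda>\<omega>. \<omega> i) \<in> measurable ?P (A \<Otimes>\<^sub>M B)" by (rule measurable_component_singleton[OF i])
      show ?thesis using measurable_compose[OF c measurable_snd] by simp
    qed
  qed
  have Phim: "?Phi \<in> measurable ?P (borel \<Otimes>\<^sub>M borel)"
    by (intro measurable_Pair measurable_compose[OF fm F] measurable_compose[OF sm G])
  have "measure ?P (?Phi -` E \<inter> space ?P) = measure (distr ?P (borel \<Otimes>\<^sub>M borel) ?Phi) E"
    by (rule measure_distr[OF Phim E, symmetric])
  also have "distr ?P (borel \<Otimes>\<^sub>M borel) ?Phi = distr (PiM I (\<lambda>_. A)) borel F \<Otimes>\<^sub>M distr (PiM I (\<lambda>_. B)) borel G"
    by (rule RED[OF I A B F G])
  finally show ?thesis .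
qed

lemma lawZ_red:
  fixes \<sigma> :: real
  assumes n: "n \<ge> 1" and sg: "\<sigma> > 0"
  shows "prob_below (law_Z \<sigma> n) n m (-2 * \<sigma>) = measure (gauss 0 \<sigma> \<Otimes>\<^sub>M gauss 0 1) (Eset m \<sigma>)"
proof -
  let ?I = "{..<n}"
  define F where "F = (\<lambda>x::nat\<Rightarrow>real. (\<Sum>i\<in>?I. x i) / sqrt (real n))"
  let ?P = "law_Z \<sigma> n"
  have Iin: "?I \<noteq> {}" using n by (auto simp: lessThan_empty_iff)
  have Fm: "F \<in> borel_measurable (PiM ?I (\<lambda>_. gauss 0 s))" for s
    unfolding F_def by measurable
  have E: "Eset m \<sigma> \<in> sets (borel \<Otimes>\<^sub>M borel)" by (rule Eset_sets) auto
  have set_eq: "{x \<in> space ?P. pstar n m x < -2 * \<sigma>}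
      = (\<lambda>\<omega>. (F (\<lambda>i\<in>?I. fst (\<omega> i)), F (\<lambda>i\<in>?I. snd (\<omega> i)))) -` Eset m \<sigma> \<inter> space ?P"
    by (auto simp: pstar_def F_def Eset_def)
  have "prob_below ?P n m (-2 * \<sigma>) = measure (distr (PiM ?I (\<lambda>_. gauss 0 \<sigma>)) borel F \<Otimes>\<^sub>M distr (PiM ?I (\<lambda>_. gauss 0 1)) borel F) (Eset m \<sigma>)"
    unfolding prob_below_def set_eq unfolding law_Z_def
    by (rule RED_measure[OF _ _ _ Fm Fm E]) (use sg in auto)
  also have "distr (PiM ?I (\<lambda>_. gauss 0 \<sigma>)) borel F = gauss 0 \<sigma>"
    unfolding F_def using gauss_sum[of ?I \<sigma> "sqrt (real n)"] sg n Iin by simp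
  also have "distr (PiM ?I (\<lambda>_. gauss 0 1)) borel F = gauss 0 1"
    unfolding F_def using gauss_sum[of ?I 1 "sqrt (real n)"] n Iin by simp
  finally show ?thesis .
qed



lemma Phi_meas:
  fixes A B :: "real measure" and I :: "nat set" and F G :: "(nat \<Rightarrow> real) \<Rightarrow> real"
  assumes F: "F \<in> borel_measurable (PiM I (\<lambda>_. A))" and G: "G \<in> borel_measurable (PiM I (\<lambda>_. B))"
  shows "(\<lambda>\<omega>. (F (\<lambda>i\<in>I. fst (\<omega> i)), G (\<lambda>i\<in>I. snd (\<omega> i)))) \<in> measurable (PiM I (\<lambda>_. A \<Otimes>\<^sub>M B)) (borel \<Otimes>\<^sub>M borel)"
proof -
  let ?P = "PiM I (\<lambda>_. A \<Otimes>\<^sub>M B)"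
  have fm: "(\<lambda>\<omega>. \<lambda>i\<in>I. fst (\<omega> i)) \<in> measurable ?P (PiM I (\<lambda>_. A))"
  proof (rule measurable_restrict)
    fix i assume i: "i \<in> I"
    have c: "(\<lambda>\<omega>. \<omega> i) \<in> measurable ?P (A \<Otimes>\<^sub>M B)" by (rule measurable_component_singleton[OF i])
    show "(\<lambda>\<omega>. fst (\<omega> i)) \<in> measurable ?P A" using measurable_compose[OF c measurable_fst] by simp
  qed
  have sm: "(\<lambda>\<omega>. \<lambda>i\<in>I. snd (\<omega> i)) \<in> measurable ?P (PiM I (\<lambda>_. B))"
  proof (rule measurable_restrict)
    fix i assume i: "i \<in> I"
    have c: "(\<lambda>\<omega>. \<omega> i) \<in> measurable ?P (A \<Otimes>\<^sub>M B)" by (rule measurable_component_singleton[OF i])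
    show "(\<lambda>\<omega>. snd (\<omega> i)) \<in> measurable ?P B" using measurable_compose[OF c measurable_snd] by simp
  qed
  show ?thesis
    by (intro measurable_Pair measurable_compose[OF fm F] measurable_compose[OF sm G])
qed

lemma sets_mu_tilde[simp, measurable_cong]: "sets (mu_tilde nu s) = sets borel"
  unfolding mu_tilde_def by simp

lemma lawX_red:
  fixes \<sigma> nu :: real
  assumes n: "n \<ge> 1" and sg: "\<sigma> > 0"
  defines "LU \<equiv> distr (PiM {..<n} (\<lambda>_. measure_pmf (U_pmf nu \<sigma>))) borel (\<lambda>x. (\<Sum>i\<in>{..<n}. x i) / (sqrt 2 * sqrt (real n)))"
  shows "prob_below (law_X nu \<sigma> n) n m (-2 * \<sigma>)
     = measure (distr (LU \<Otimes>\<^sub>M gauss 0 (\<sigma> / sqrt 2)) borel (\<lambda>(u,z). u + z) \<Otimes>\<^sub>M gauss 0 1) (Eset m \<sigma>)"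
proof -
  let ?I = "{..<n}"
  let ?U = "measure_pmf (U_pmf nu \<sigma>)"
  let ?UG = "?U \<Otimes>\<^sub>M gauss 0 \<sigma>"
  let ?MT = "mu_tilde nu \<sigma>"
  define h where "h = (\<lambda>(u::real, z::real). u / sqrt 2 + z / sqrt 2)"
  define F where "F = (\<lambda>x::nat\<Rightarrow>real. (\<Sum>i\<in>?I. x i) / sqrt (real n))"
  define F2 where "F2 = (\<lambda>x::nat\<Rightarrow>real. (\<Sum>i\<in>?I. x i) / (sqrt 2 * sqrt (real n)))"
  have Iin: "?I \<noteq> {}" using n by (auto simp: lessThan_empty_iff)
  interpret U: prob_space ?U by (rule measure_pmf.prob_space_axioms)
  interpret Gs: prob_space "gauss 0 \<sigma>" using sg by simp
  interpret UG: pair_prob_space ?U "gauss 0 \<sigma>" ..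
  have f1: "(\<lambda>p. fst p) \<in> borel_measurable ?UG"
  proof -
    have a: "(\<lambda>y::real. y) \<in> measurable ?U borel" by simp
    have b: "fst \<in> measurable ?UG ?U" by (rule measurable_fst)
    from measurable_compose[OF b a] show ?thesis by simp
  qed
  have f2: "(\<lambda>p. snd p) \<in> borel_measurable ?UG"
  proof -
    have a: "(\<lambda>y::real. y) \<in> measurable (gauss 0 \<sigma>) borel" by (simp add: measurable_ident_sets)
    have b: "snd \<in> measurable ?UG (gauss 0 \<sigma>)" by (rule measurable_snd)
    from measurable_compose[OF b a] show ?thesis by simp
  qed
  have hm: "h \<in> borel_measurable ?UG" unfolding h_def split_beta'
    by (intro borel_measurable_add borel_measurable_divide f1 f2) auto
  have hm': "h \<in> measurable ?UG ?MT"
    using hm measurable_cong_sets[OF refl sets_mu_tilde[of nu \<sigma>], of ?UG] by simp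
  have MT_eq: "?MT = distr ?UG borel h" unfolding mu_tilde_def h_def ..
  have MTp: "prob_space ?MT" unfolding MT_eq by (intro UG.prob_space_distr hm)
  have E: "Eset m \<sigma> \<in> sets (borel \<Otimes>\<^sub>M borel)" by (rule Eset_sets) auto
  have FmT: "F \<in> borel_measurable (PiM ?I (\<lambda>_. ?MT))" unfolding F_def by measurable
  have Fm1: "F \<in> borel_measurable (PiM ?I (\<lambda>_. gauss 0 1))" unfolding F_def by measurable
  have set_eq: "{x \<in> space (law_X nu \<sigma> n). pstar n m x < -2 * \<sigma>}
      = (\<lambda>\<omega>. (F (\<lambda>i\<in>?I. fst (\<omega> i)), F (\<lambda>i\<in>?I. snd (\<omega> i)))) -` Eset m \<sigma> \<inter> space (law_X nu \<sigma> n)"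
    by (auto simp: pstar_def F_def Eset_def)
  have "prob_below (law_X nu \<sigma> n) n m (-2 * \<sigma>) = measure (distr (PiM ?I (\<lambda>_. ?MT)) borel F \<Otimes>\<^sub>M distr (PiM ?I (\<lambda>_. gauss 0 1)) borel F) (Eset m \<sigma>)"
    unfolding prob_below_def set_eq unfolding law_X_def
    by (rule RED_measure[OF _ MTp _ FmT Fm1 E]) auto
  also have "distr (PiM ?I (\<lambda>_. gauss 0 1)) borel F = gauss 0 1"
    unfolding F_def using gauss_sum[of ?I 1 "sqrt (real n)"] n Iin by simp
  also have "distr (PiM ?I (\<lambda>_. ?MT)) borel F = distr (LU \<Otimes>\<^sub>M gauss 0 (\<sigma> / sqrt 2)) borel (\<lambda>(u,z). u + z)"
  proof -
    have "distr ?UG ?MT h = distr ?UG borel h" by (intro distr_cong) auto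
    then have dh: "distr ?UG ?MT h = ?MT" using MT_eq by simp
    have "distr (PiM ?I (\<lambda>_. ?UG)) (PiM ?I (\<lambda>_. ?MT)) (compose ?I h) = PiM ?I (\<lambda>i. distr ?UG ?MT h)"
      by (rule distr_PiM_finite_prob_space') (auto simp: UG.prob_space_axioms MTp hm')
    then have P1: "PiM ?I (\<lambda>_. ?MT) = distr (PiM ?I (\<lambda>_. ?UG)) (PiM ?I (\<lambda>_. ?MT)) (compose ?I h)"
      by (simp add: dh)
    have cm: "compose ?I h \<in> measurable (PiM ?I (\<lambda>_. ?UG)) (PiM ?I (\<lambda>_. ?MT))"
      unfolding compose_def
    proof (rule measurable_restrict)
      fix i assume i: "i \<in> ?I"
      have c: "(\<lambda>\<omega>. \<omega> i) \<in> measurable (PiM ?I (\<lambda>_. ?UG)) ?UG" by (rule measurable_component_singleton[OF i])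
      show "(\<lambda>x. h (x i)) \<in> measurable (PiM ?I (\<lambda>_. ?UG)) ?MT" using measurable_compose[OF c hm'] .
    qed
    let ?Phi = "\<lambda>\<omega>. (F2 (\<lambda>i\<in>?I. fst (\<omega> i)), F2 (\<lambda>i\<in>?I. snd (\<omega> i)))"
    have F2U: "F2 \<in> borel_measurable (PiM ?I (\<lambda>_. ?U))"
    proof -
      have cmU: "(\<lambda>x. x i) \<in> borel_measurable (PiM ?I (\<lambda>_. ?U))" if i: "i \<in> ?I" for i
      proof -
        have "(\<lambda>y::real. y) \<in> measurable ?U borel" by simp
        from measurable_compose[OF measurable_component_singleton[OF i] this] show ?thesis .
      qed
      show ?thesis unfolding F2_def by (intro borel_measurable_divide borel_measurable_sum cmU) auto
    qed
    have F2G: "F2 \<in> borel_measurable (PiM ?I (\<lambda>_. gauss 0 \<sigma>))" unfolding F2_def by measurable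
    have Phim: "?Phi \<in> measurable (PiM ?I (\<lambda>_. ?UG)) (borel \<Otimes>\<^sub>M borel)"
      by (rule Phi_meas[OF F2U F2G])
    have addm: "(\<lambda>(a::real, b::real). a + b) \<in> measurable (borel \<Otimes>\<^sub>M borel) borel" by measurable
    have "distr (PiM ?I (\<lambda>_. ?MT)) borel F = distr (distr (PiM ?I (\<lambda>_. ?UG)) (PiM ?I (\<lambda>_. ?MT)) (compose ?I h)) borel F"
      using P1 by simp
    also have "\<dots> = distr (PiM ?I (\<lambda>_. ?UG)) borel (F \<circ> compose ?I h)"
      by (rule distr_distr[OF FmT cm])
    also have "\<dots> = distr (PiM ?I (\<lambda>_. ?UG)) borel ((\<lambda>(a, b). a + b) \<circ> ?Phi)"
    proof (intro distr_cong refl)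
      fix \<omega> :: "nat \<Rightarrow> real \<times> real"
      have "(F \<circ> compose ?I h) \<omega> = (\<Sum>i\<in>?I. fst (\<omega> i) / sqrt 2 + snd (\<omega> i) / sqrt 2) / sqrt (real n)"
        by (simp add: F_def compose_def h_def split_beta)
      also have "\<dots> = (\<Sum>i\<in>?I. fst (\<omega> i)) / (sqrt 2 * sqrt (real n)) + (\<Sum>i\<in>?I. snd (\<omega> i)) / (sqrt 2 * sqrt (real n))"
        by (simp add: sum.distrib sum_divide_distrib[symmetric] add_divide_distrib divide_divide_eq_left mult.commute)
      also have "\<dots> = ((\<lambda>(a, b). a + b) \<circ> ?Phi) \<omega>"
        by (simp add: F2_def)
      finally show "(F \<circ> compose ?I h) \<omega> = ((\<lambda>(a, b). a + b) \<circ> ?Phi) \<omega>" .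
    qed
    also have "\<dots> = distr (distr (PiM ?I (\<lambda>_. ?UG)) (borel \<Otimes>\<^sub>M borel) ?Phi) borel (\<lambda>(a, b). a + b)"
      by (rule distr_distr[OF addm Phim, symmetric])
    also have "distr (PiM ?I (\<lambda>_. ?UG)) (borel \<Otimes>\<^sub>M borel) ?Phi
        = distr (PiM ?I (\<lambda>_. ?U)) borel F2 \<Otimes>\<^sub>M distr (PiM ?I (\<lambda>_. gauss 0 \<sigma>)) borel F2"
      by (rule RED[OF _ _ _ F2U F2G]) (auto simp: measure_pmf.prob_space_axioms sg)
    also have "distr (PiM ?I (\<lambda>_. ?U)) borel F2 = LU" unfolding LU_def F2_def ..
    also have "distr (PiM ?I (\<lambda>_. gauss 0 \<sigma>)) borel F2 = gauss 0 (\<sigma> / sqrt 2)"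
    proof -
      have "distr (PiM ?I (\<lambda>_. gauss 0 \<sigma>)) borel F2 = gauss 0 (\<sigma> * sqrt (real (card ?I)) / (sqrt 2 * sqrt (real n)))"
        unfolding F2_def using sg n Iin by (intro gauss_sum) auto
      also have "\<sigma> * sqrt (real (card ?I)) / (sqrt 2 * sqrt (real n)) = \<sigma> / sqrt 2"
        using n by simp
      finally show ?thesis .
    qed
    finally show ?thesis .
  qed
  finally show ?thesis .
qed



lemma final_ineq:
  fixes \<sigma> s e :: real and LU :: "real measure"
  assumes sg: "\<sigma> > 0" "\<sigma> \<le> 1" and m: "even m" "m > 0"
    and LU: "prob_space LU" and sLU: "sets LU = sets borel"
    and s: "s \<ge> 0" and e: "e \<ge> 0"
    and h1: "emeasure LU {u. u \<noteq> 0} \<le> ennreal s"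
    and h2: "(\<integral>\<^sup>+u. indicator {u. u \<noteq> 0} u * ennreal ((2 * \<bar>u\<bar>) powr (1 / real m)) \<partial>LU) \<le> ennreal e"
  shows "measure (gauss 0 \<sigma> \<Otimes>\<^sub>M gauss 0 1) (Eset m \<sigma>)
     - measure (distr (LU \<Otimes>\<^sub>M gauss 0 (\<sigma> / sqrt 2)) borel (\<lambda>(u,z). u + z) \<Otimes>\<^sub>M gauss 0 1) (Eset m \<sigma>)
     \<ge> 1/1000 * ((\<sigma>/2) powr (1 / real m) / 3) - e - s * (3/2 * \<sigma> powr (1 / real m))"
proof -
  let ?G = "gauss 0 1" and ?GZ = "gauss 0 \<sigma>" and ?GH = "gauss 0 (\<sigma> / sqrt 2)"
  let ?LA = "distr (LU \<Otimes>\<^sub>M ?GH) borel (\<lambda>(u,z). u + z)"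
  have sH: "\<sigma> / sqrt 2 > 0" using sg by simp
  interpret G: prob_space ?G by simp
  interpret GZ: prob_space ?GZ using sg by simp
  interpret GH: prob_space ?GH using sH by simp
  interpret LU: prob_space LU by fact
  interpret PZ: pair_prob_space ?GZ ?G ..
  interpret PH: pair_prob_space ?GH ?G ..
  interpret PL: pair_prob_space LU ?GH ..
  have addm: "(\<lambda>(u,z). u + z) \<in> measurable (LU \<Otimes>\<^sub>M ?GH) (borel :: real measure)"
    using sLU by measurable
  interpret LA: prob_space ?LA by (intro PL.prob_space_distr addm)
  interpret PA: pair_prob_space ?LA ?G ..
  define PZv where "PZv = measure (?GZ \<Otimes>\<^sub>M ?G) (Eset m \<sigma>)"
  define Rv where "Rv = measure (?GH \<Otimes>\<^sub>M ?G) (Eset m \<sigma>)"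
  define PXv where "PXv = measure (?LA \<Otimes>\<^sub>M ?G) (Eset m \<sigma>)"
  define d where "d = 1/1000 * ((\<sigma>/2) powr (1 / real m) / 3)"
  define b where "b = 3/2 * \<sigma> powr (1 / real m)"
  have d0: "d \<ge> 0" and b0: "b \<ge> 0" by (simp_all add: d_def b_def)
  have Z: "ennreal Rv + ennreal d \<le> ennreal PZv"
    using Zside[OF sg m]
    by (simp add: Rv_def PZv_def d_def PH.emeasure_eq_measure PZ.emeasure_eq_measure ennreal_mult'[symmetric])
  have X: "ennreal PXv \<le> ennreal Rv + ennreal e + ennreal s * ennreal b"
    using Xside[OF sg(1) m LU sLU s e h1 h2]
    by (simp add: Rv_def PXv_def b_def PH.emeasure_eq_measure PA.emeasure_eq_measure)
  have Rv0: "Rv \<ge> 0" and PZ0: "PZv \<ge> 0" by (simp_all add: Rv_def PZv_def)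
  have "ennreal Rv + ennreal d = ennreal (Rv + d)" using Rv0 d0 by (rule ennreal_plus[symmetric])
  with Z have "ennreal (Rv + d) \<le> ennreal PZv" by simp
  then have "Rv + d \<le> PZv" using PZ0 by (simp add: ennreal_le_iff)
  moreover have "PXv \<le> Rv + e + s * b"
  proof -
    have sb0: "0 \<le> s * b" using s b0 by simp
    have "ennreal s * ennreal b = ennreal (s * b)" using s b0 by (rule ennreal_mult[symmetric])
    moreover have "ennreal Rv + ennreal e = ennreal (Rv + e)" using Rv0 e by (rule ennreal_plus[symmetric])
    moreover have "ennreal (Rv + e) + ennreal (s * b) = ennreal (Rv + e + s * b)"
      using Rv0 e sb0 by (intro ennreal_plus[symmetric]) auto
    ultimately have "ennreal Rv + ennreal e + ennreal s * ennreal b = ennreal (Rv + e + s * b)" by simp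
    with X have "ennreal PXv \<le> ennreal (Rv + e + s * b)" by simp
    then show ?thesis using Rv0 e sb0 by (subst (asm) ennreal_le_iff) auto
  qed
  ultimately show ?thesis unfolding PZv_def[symmetric] PXv_def[symmetric] d_def[symmetric] b_def[symmetric]
    by linarith
qed



lemma powr_ge_self:
  fixes x :: real
  assumes "0 \<le> x" "x \<le> 1" "m > 0"
  shows "x \<le> x powr (1 / real m)"
proof -
  have "x powr 1 \<le> x powr (1 / real m)"
    using assms by (intro powr_mono') (auto simp: divide_simps)
  then show ?thesis using assms by simp
qed

lemma sum_div_meas_pmf:
  fixes U :: "real pmf" and I :: "nat set" and c :: real
  shows "(\<lambda>x. (\<Sum>i\<in>I. x i) / c) \<in> borel_measurable (PiM I (\<lambda>_. measure_pmf U))"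
proof -
  have cmU: "(\<lambda>x. x i) \<in> borel_measurable (PiM I (\<lambda>_. measure_pmf U))" if i: "i \<in> I" for i
  proof -
    have "(\<lambda>y::real. y) \<in> measurable (measure_pmf U) borel" by simp
    from measurable_compose[OF measurable_component_singleton[OF i] this] show ?thesis .
  qed
  show ?thesis by (intro borel_measurable_divide borel_measurable_sum cmU) auto
qed

theorem lemmaG1:
  fixes nu :: real and m :: "nat \<Rightarrow> nat"
  assumes nu: "nu > 2"
    and m_even: "\<And>n. even (m n) \<and> m n > 0"
    and m_small: "(\<lambda>n. real (m n)) \<in> o(\<lambda>n. ln (real n))"
  shows "\<exists>c sigma0 :: real. \<exists>N :: nat. c > 0 \<and> sigma0 > 0 \<and>
    (\<forall>n\<ge>N. let sn = min (sigma0 * real n powr (- (nu - 2) / (2 * nu))) 1 in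
       3 * sn powr (2 * nu / (nu - 2)) \<le> 1 \<and>
       prob_below (law_Z sn n) n (m n) (- 2 * sn) - prob_below (law_X nu sn n) n (m n) (- 2 * sn)
         \<ge> c * real n powr (- (nu - 2) / (2 * nu * real (m n))))"
proof -
  define a where "a = (nu - 2) / (2 * nu)"
  define q where "q = 2 * nu / (nu - 2)"
  have a0: "a > 0" using nu by (simp add: a_def)
  have q0: "q > 0" using nu by (simp add: q_def)
  have aq: "a * q = 1" using nu by (simp add: a_def q_def field_simps)
  define \<rho> :: real where "\<rho> = 3 * (1 / 10^6)^2"
  have \<rho>0: "\<rho> > 0" and \<rho>1: "\<rho> \<le> 1/3" by (simp_all add: \<rho>_def power2_eq_square)
  define \<sigma>0 where "\<sigma>0 = \<rho> powr a"
  have s00: "\<sigma>0 > 0" using \<rho>0 by (simp add: \<sigma>0_def)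
  have s01: "\<sigma>0 \<le> 1" unfolding \<sigma>0_def using \<rho>0 \<rho>1 a0 by (intro powr_le1) auto
  have s0q: "\<sigma>0 powr q = \<rho>" unfolding \<sigma>0_def using \<rho>0 by (simp add: powr_powr aq)
  define c where "c = \<sigma>0 / 12000"
  have c0: "c > 0" using s00 by (simp add: c_def)
  have main: "3 * sn powr (2 * nu / (nu - 2)) \<le> 1 \<and>
       prob_below (law_Z sn n) n (m n) (- 2 * sn) - prob_below (law_X nu sn n) n (m n) (- 2 * sn)
         \<ge> c * real n powr (- (nu - 2) / (2 * nu * real (m n)))"
    if n: "n \<ge> 1" and sn_def: "sn = min (\<sigma>0 * real n powr (- (nu - 2) / (2 * nu))) 1" for n sn
  proof -
    define t where "t = real n powr (- (nu - 2) / (2 * nu))"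
    have tdef: "t = real n powr (- a)" unfolding t_def a_def minus_divide_left by (rule refl)
    have t0: "t > 0" using n by (simp add: t_def)
    have t1: "t \<le> 1"
    proof -
      have "1 \<le> real n powr a" using n a0 by (intro ge_one_powr_ge_zero) auto
      then have "1 / real n powr a \<le> 1 / 1" using n by (intro divide_left_mono) auto
      then show ?thesis by (simp add: tdef powr_minus_divide)
    qed
    have snv: "sn = \<sigma>0 * t"
    proof -
      have "\<sigma>0 * t \<le> 1" using s01 t1 s00 t0 by (simp add: mult_le_one)
      then show ?thesis unfolding sn_def t_def[symmetric] by simp
    qed
    define \<sigma> where "\<sigma> = sn"
    have sg0: "\<sigma> > 0" using s00 t0 by (simp add: \<sigma>_def snv)
    have sg1: "\<sigma> \<le> 1" using s01 t1 s00 t0 by (simp add: \<sigma>_def snv mult_le_one)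
    define p where "p = \<sigma> powr (2 * nu / (nu - 2))"
    have tq: "t powr q = 1 / real n"
    proof -
      have "t powr q = real n powr (- a * q)" by (simp add: tdef powr_powr)
      also have "\<dots> = real n powr (-1)" using aq by simp
      finally show ?thesis using n by (simp add: powr_neg_one)
    qed
    have pv: "p = \<rho> / real n"
    proof -
      have "p = (\<sigma>0 * t) powr q" by (simp add: p_def q_def \<sigma>_def snv)
      also have "\<dots> = \<sigma>0 powr q * t powr q" by (rule powr_mult)
      finally show ?thesis using s0q tq by simp
    qed
    have p0: "p > 0" using \<rho>0 n by (simp add: pv)
    have pn: "p * real n = \<rho>" using n by (simp add: pv)
    have p3: "3 * p \<le> 1"
    proof -
      have "p \<le> \<rho>" using pv \<rho>0 n by (simp add: divide_le_eq)
      then show ?thesis using \<rho>1 by linarith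
    qed
    define x0 where "x0 = \<sigma> / sqrt (6 * p)"
    define cl where "cl = sqrt 2 * sqrt (real n)"
    have cl0: "cl > 0" using n by (simp add: cl_def)
    define LU where "LU = distr (PiM {..<n} (\<lambda>_. measure_pmf (U_pmf nu \<sigma>))) borel (\<lambda>x. (\<Sum>i\<in>{..<n}. x i) / cl)"
    have mpos: "m n > 0" and meven: "even (m n)" using m_even by auto
    note LB = LU_bounds[of \<sigma> nu "{..<n}" cl "m n", folded p_def, folded x0_def, folded LU_def, OF sg0 p3 finite_lessThan cl0 mpos, simplified]
    have K: "4 * x0 / (\<sigma> * cl) = 4 * 10^6 / 6"
    proof -
      have "sqrt (6 * p) * cl = sqrt (12 * (p * real n))"
        by (simp add: cl_def real_sqrt_mult[symmetric])
      also have "12 * (p * real n) = (6 / 10^6)^2" by (simp add: pn \<rho>_def power2_eq_square)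
      also have "sqrt ((6 / 10^6)^2) = (6 / 10^6 :: real)" by simp
      finally have e: "sqrt (6 * p) * cl = 6 / 10^6" .
      have "4 * x0 / (\<sigma> * cl) = 4 / (sqrt (6 * p) * cl)"
        using sg0 p0 cl0 by (simp add: x0_def field_simps)
      then show ?thesis using e by simp
    qed
    define A where "A = \<sigma> powr (1 / real (m n))"
    have A0: "A > 0" using sg0 by (simp add: A_def)
    define s where "s = 3 * p * real n"
    define e where "e = A * (1 + 4 * 10^6 / 6) * s"
    have sv: "s = 9 / 10^12" by (simp add: s_def pn[symmetric, THEN sym] \<rho>_def mult.assoc) (simp add: pn \<rho>_def power2_eq_square)
    have h1: "emeasure LU {u. u \<noteq> 0} \<le> ennreal s" using LB(1) by (simp add: s_def mult.assoc)
    have h2: "(\<integral>\<^sup>+u. indicator {u. u \<noteq> 0} u * ennreal ((2 * \<bar>u\<bar>) powr (1 / real (m n))) \<partial>LU) \<le> ennreal e"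
      using LB(2) K by (simp add: e_def A_def s_def mult.assoc)
    have LUp: "prob_space LU" unfolding LU_def
      by (intro prob_space.prob_space_distr prob_space_PiM measure_pmf.prob_space_axioms sum_div_meas_pmf)
    have sLU: "sets LU = sets borel" by (simp add: LU_def)
    have s0: "s \<ge> 0" and e0: "e \<ge> 0" using A0 by (simp_all add: sv e_def)
    have FI: "measure (gauss 0 \<sigma> \<Otimes>\<^sub>M gauss 0 1) (Eset (m n) \<sigma>)
     - measure (distr (LU \<Otimes>\<^sub>M gauss 0 (\<sigma> / sqrt 2)) borel (\<lambda>(u,z). u + z) \<Otimes>\<^sub>M gauss 0 1) (Eset (m n) \<sigma>)
     \<ge> 1/1000 * ((\<sigma>/2) powr (1 / real (m n)) / 3) - e - s * (3/2 * \<sigma> powr (1 / real (m n)))"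
      by (rule final_ineq[OF sg0 sg1 meven mpos LUp sLU s0 e0 h1 h2])
    have PZ: "prob_below (law_Z \<sigma> n) n (m n) (-2 * \<sigma>) = measure (gauss 0 \<sigma> \<Otimes>\<^sub>M gauss 0 1) (Eset (m n) \<sigma>)"
      by (rule lawZ_red[OF n sg0])
    have PX: "prob_below (law_X nu \<sigma> n) n (m n) (-2 * \<sigma>)
     = measure (distr (LU \<Otimes>\<^sub>M gauss 0 (\<sigma> / sqrt 2)) borel (\<lambda>(u,z). u + z) \<Otimes>\<^sub>M gauss 0 1) (Eset (m n) \<sigma>)"
      unfolding LU_def cl_def by (rule lawX_red[OF n sg0])
    have half: "(\<sigma>/2) powr (1 / real (m n)) \<ge> A / 2"
    proof -
      have "(\<sigma>/2) powr (1 / real (m n)) = A * (1/2) powr (1 / real (m n))"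
        using sg0 by (simp add: A_def powr_divide)
      moreover have "1/2 \<le> (1/2::real) powr (1 / real (m n))"
        using mpos by (intro powr_ge_self) auto
      ultimately show ?thesis using A0 by (simp add: mult_left_mono[of "1/2" _ A, simplified])
    qed
    have lowA: "1/1000 * ((\<sigma>/2) powr (1 / real (m n)) / 3) - e - s * (3/2 * A) \<ge> A / 12000"
    proof -
      have "1/1000 * ((\<sigma>/2) powr (1 / real (m n)) / 3) \<ge> 1/1000 * (A / 2 / 3)" using half by simp
      moreover have "e + s * (3/2 * A) = A * ((1 + 4 * 10^6 / 6) * (9 / 10^12) + 9 / 10^12 * (3/2))"
        by (simp add: e_def sv algebra_simps)
      moreover have "A * ((1 + 4 * 10^6 / 6) * (9 / 10^12) + 9 / 10^12 * (3/2)) \<le> A * (1/12000)"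
        using A0 by (intro mult_left_mono) auto
      ultimately show ?thesis by simp
    qed
    have Aval: "A \<ge> \<sigma>0 * real n powr (- (nu - 2) / (2 * nu * real (m n)))"
    proof -
      have "A = \<sigma>0 powr (1 / real (m n)) * t powr (1 / real (m n))"
        by (simp add: A_def \<sigma>_def snv powr_mult)
      also have "t powr (1 / real (m n)) = real n powr (- (nu - 2) / (2 * nu * real (m n)))"
        by (simp add: t_def powr_powr)
      finally have "A = \<sigma>0 powr (1 / real (m n)) * real n powr (- (nu - 2) / (2 * nu * real (m n)))" .
      moreover have "\<sigma>0 \<le> \<sigma>0 powr (1 / real (m n))" using s00 s01 mpos by (intro powr_ge_self) auto
      ultimately show ?thesis by (simp add: mult_right_mono)
    qed
    show ?thesis
    proof
      show "3 * sn powr (2 * nu / (nu - 2)) \<le> 1" using p3 by (simp add: p_def \<sigma>_def)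
      have "prob_below (law_Z sn n) n (m n) (- 2 * sn) - prob_below (law_X nu sn n) n (m n) (- 2 * sn)
          \<ge> A / 12000"
        using FI lowA PZ PX by (simp add: \<sigma>_def A_def)
      moreover have "A / 12000 \<ge> c * real n powr (- (nu - 2) / (2 * nu * real (m n)))"
        using Aval by (simp add: c_def)
      ultimately show "prob_below (law_Z sn n) n (m n) (- 2 * sn) - prob_below (law_X nu sn n) n (m n) (- 2 * sn)
         \<ge> c * real n powr (- (nu - 2) / (2 * nu * real (m n)))" by linarith
    qed
  qed
  show ?thesis
    by (rule exI[of _ c], rule exI[of _ \<sigma>0], rule exI[of _ 1]) (use c0 s00 main in \<open>auto simp: Let_def\<close>)
qed


end
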